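(* Let $0<p<p_0<1$, let $A,B>0$ be constants and let $x_{\mathrm{home}}\in\mathbb{Z}^2$ be fixed. Consider the guided random walk following the sweeping strategy with parameters $A,B,p_0$, and suppose a phase starts at time $t>0$. Conditioned on the position $X_t$ of the agent at the beginning of the phase lying in the box $[-A\sqrt t, A\sqrt t]\times[-B\sqrt t,B\sqrt t]$, with probability at least $\frac{1-o(1)}{G}$ the agent visits $x_{\mathrm{home}}$ at some time step during the phase, where $G=\lceil \frac{1}{1-p_0}\frac{\sqrt t}{\ln t}\rceil$ and $o(1)\to0$ as $t\to\infty$.
   Context: The guided random walk with error probability $p$ following instructions $(x_t)_{t\ge0}$ (a nearest-neighbour walk in $\mathbb{Z}^2$, $x_0=0$) is the process $(X_t)$ with $X_0=0$ and independent increments, $X_{t+1}-X_t = x_{t+1}-x_t$ with probability $1-p$, and uniform on $\{(\pm1,0),(0,\pm1)\}$ with probability $p$. The sweeping strategy consists of consecutive phases; each phase starts at a time $t$ with $x_t = 0$. For a phase starting at time $t$ set $W=\lceil \frac{1}{1-p_0}A\sqrt t\rceil$, $H=\lceil\frac{1}{1-p_0}B\sqrt t\rceil$, $G=\lceil\frac{1}{1-p_0}\frac{\sqrt t}{\ln t}\rceil$, $N=\lceil 2H/G\rceil$, and give the instructions: (1) move $W$ steps west and $H$ steps south (to $(-W,-H)$); (2) move $Z$ steps north, where $Z$ is uniform on $\{0,1,\dots,G+\lceil t^{1/3}\rceil\}$, independent of everything else; (3) trace $N$ horizontal lines by alternately moving $2W$ steps east, $G$ steps north, $2W$ steps west, $G$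 steps north, and so on; (4) move $G+\lceil t^{1/3}\rceil - Z$ steps north, then return to $(0,0)$. The next phase starts when this one ends. *)

theory Defs
  imports "HOL-Probability.Probability"
begin

definition sweep_W :: "real \<Rightarrow> real \<Rightarrow> nat \<Rightarrow> nat" where
  "sweep_W p0 A t = nat \<lceil>(1 / (1 - p0)) * A * sqrt (real t)\<rceil>"

definition sweep_H :: "real \<Rightarrow> real \<Rightarrow> nat \<Rightarrow> nat" where
  "sweep_H p0 B t = nat \<lceil>(1 / (1 - p0)) * B * sqrt (real t)\<rceil>"

definition sweep_G :: "real \<Rightarrow> nat \<Rightarrow> nat" where
  "sweep_G p0 t = nat \<lceil>(1 / (1 - p0)) * (sqrt (real t) / ln (real t))\<rceil>"

definition sweep_N :: "real \<Rightarrow> real \<Rightarrow> nat \<Rightarrow> nat" where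
  "sweep_N p0 B t = nat \<lceil>2 * real (sweep_H p0 B t) / real (sweep_G p0 t)\<rceil>"

definition sweep_c :: "nat \<Rightarrow> nat" where
  "sweep_c t = nat \<lceil>real t powr (1/3)\<rceil>"

definition go_to :: "int \<times> int \<Rightarrow> int \<times> int \<Rightarrow> (int \<times> int) list" where
  "go_to a b = (let dx = fst b - fst a; dy = snd b - snd a in
      replicate (nat \<bar>dx\<bar>) (sgn dx, 0) @ replicate (nat \<bar>dy\<bar>) (0, sgn dy))"

text \<open>The list of instruction increments x_{s+1}-x_s of the phase starting at time t,
  given the value z of the random variable Z.\<close>
definition phase_instr :: "real \<Rightarrow> real \<Rightarrow> real \<Rightarrow> nat \<Rightarrow> nat \<Rightarrow> (int \<times> int) list" where
  "phase_instr p0 A B t z =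
    (let W = sweep_W p0 A t; H = sweep_H p0 B t; G = sweep_G p0 t; N = sweep_N p0 B t;
         c = sweep_c t;
         part1 = replicate W (-1, 0) @ replicate H (0, -1);
         part2 = replicate z (0, 1);
         part3 = concat (map (\<lambda>i. replicate (2 * W) (if even i then (1, 0) else (-1, 0))
                                   @ (if i + 1 < N then replicate G (0, 1) else [])) [0..<N]);
         part4 = replicate (G + c - z) (0, 1);
         pre = part1 @ part2 @ part3 @ part4
     in pre @ go_to (sum_list pre) (0, 0))"

definition unit_dirs :: "(int \<times> int) set" where
  "unit_dirs = {(1, 0), (-1, 0), (0, 1), (0, -1)}"

definition step_pmf :: "real \<Rightarrow> int \<times> int \<Rightarrow> (int \<times> int) pmf" where
  "step_pmf p d = bind_pmf (bernoulli_pmf p)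
     (\<lambda>err. if err then pmf_of_set unit_dirs else return_pmf d)"

primrec incr_pmf :: "real \<Rightarrow> (int \<times> int) list \<Rightarrow> (int \<times> int) list pmf" where
  "incr_pmf p [] = return_pmf []"
| "incr_pmf p (d # ds) = bind_pmf (step_pmf p d) (\<lambda>e. map_pmf (Cons e) (incr_pmf p ds))"

definition phase_pmf :: "real \<Rightarrow> real \<Rightarrow> real \<Rightarrow> real \<Rightarrow> nat \<Rightarrow> (int \<times> int) list pmf" where
  "phase_pmf p p0 A B t =
     bind_pmf (pmf_of_set {0 .. sweep_G p0 t + sweep_c t}) (\<lambda>z. incr_pmf p (phase_instr p0 A B t z))"

text \<open>Starting at y, the walk with increments es visits x at some time of the phase
  (times t, t+1, ..., t + length es).\<close>
definition visits :: "int \<times> int \<Rightarrow> int \<times> int \<Rightarrow> (int \<times> int) list \<Rightarrow> bool" where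
  "visits y x es = (\<exists>k \<le> length es. y + sum_list (take k es) = x)"

end

theory Submission
  imports Defs "HOL-Analysis.Fashoda_Theorem" "HOL-Real_Asymp.Real_Asymp"
begin

definition dotv :: "int \<times> int \<Rightarrow> int \<times> int \<Rightarrow> int" where
  "dotv v e = fst v * fst e + snd v * snd e"

lemma incr_append:
  "incr_pmf p (xs @ ys) = map_pmf (\<lambda>(a,b). a @ b) (pair_pmf (incr_pmf p xs) (incr_pmf p ys))"
proof (induction xs)
  case Nil
  show ?case by (simp add: pair_return_pmf1 map_pmf_comp)
next
  case (Cons d xs)
  show ?case
    by (simp add: Cons.IH pair_pmf_def map_pmf_def bind_assoc_pmf bind_return_pmf)
qed

lemma incr_take: "map_pmf (take k) (incr_pmf p ds) = incr_pmf p (take k ds)"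
proof (induction ds arbitrary: k)
  case Nil
  then show ?case by simp
next
  case (Cons d ds)
  show ?case
  proof (cases k)
    case 0
    then show ?thesis by (simp add: map_pmf_const)
  next
    case (Suc k')
    have "map_pmf (take k) (incr_pmf p (d # ds))
        = bind_pmf (step_pmf p d) (\<lambda>e. map_pmf (Cons e) (map_pmf (take k') (incr_pmf p ds)))"
      by (simp add: Suc map_bind_pmf map_pmf_comp)
    also have "\<dots> = incr_pmf p (take k (d # ds))"
      by (simp add: Suc Cons.IH)
    finally show ?thesis .
  qed
qed

lemma finite_unit_dirs: "finite unit_dirs" and nonempty_unit_dirs: "unit_dirs \<noteq> {}"
  by (auto simp: unit_dirs_def)

lemma set_step_pmf: "set_pmf (step_pmf p d) \<subseteq> insert d unit_dirs"
  unfolding step_pmf_def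
  by (auto simp: set_bind_pmf finite_unit_dirs nonempty_unit_dirs split: if_splits)

lemma incr_support:
  assumes "set ds \<subseteq> unit_dirs" "es \<in> set_pmf (incr_pmf p ds)"
  shows "length es = length ds \<and> set es \<subseteq> unit_dirs"
  using assms
proof (induction ds arbitrary: es)
  case Nil
  then show ?case by simp
next
  case (Cons d ds)
  from Cons.prems(2) obtain e es' where e: "e \<in> set_pmf (step_pmf p d)"
    and es': "es' \<in> set_pmf (incr_pmf p ds)" and es: "es = e # es'"
    by (auto simp: set_bind_pmf)
  have "e \<in> unit_dirs" using e set_step_pmf[of p d] Cons.prems(1) by auto
  with Cons.IH[OF _ es'] Cons.prems(1) es show ?case by auto
qed

lemma exp_quad_bound:
  fixes x :: real assumes "\<bar>x\<bar> \<le> 1" shows "exp x \<le> 1 + x + x^2"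
proof (cases "x \<ge> 0")
  case True then show ?thesis using exp_bound[of x] assms by auto
next
  case False
  have pos: "0 < 1 - x" using False by auto
  have "1 - x \<le> exp (-x)" using exp_ge_add_one_self[of "-x"] by simp
  hence "exp x \<le> 1 / (1 - x)" using pos by (simp add: exp_minus field_simps)
  also have "\<dots> \<le> 1 + x + x^2"
  proof -
    have c: "x * (x * x) \<le> 0" using False by (intro mult_nonpos_nonneg) auto
    have "1 \<le> (1 + x + x^2) * (1 - x)" using c
      by (simp add: algebra_simps power2_eq_square)
    thus ?thesis using pos by (simp add: field_simps)
  qed
  finally show ?thesis .
qed

lemma sum_dotv_unit_dirs: "(\<Sum>u\<in>unit_dirs. dotv v u) = 0"
  by (simp add: unit_dirs_def dotv_def)

lemma card_unit_dirs: "card unit_dirs = 4"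
  by (simp add: unit_dirs_def)

lemma dotv_unit_bound: "v \<in> unit_dirs \<Longrightarrow> u \<in> unit_dirs \<Longrightarrow> \<bar>dotv v u\<bar> \<le> 1"
  by (auto simp: unit_dirs_def dotv_def)

lemma step_mgf:
  assumes p: "0 \<le> p" "p \<le> 1" and v: "v \<in> unit_dirs" and d: "d \<in> unit_dirs" and l: "\<bar>l\<bar> \<le> 1/2"
  shows "(\<integral>\<^sup>+e. ennreal (exp (l * (real_of_int (dotv v e) - (1-p) * real_of_int (dotv v d)))) \<partial>step_pmf p d)
         \<le> ennreal (exp (4 * l^2))"
proof -
  define Y where "Y u = real_of_int (dotv v u) - (1-p) * real_of_int (dotv v d)" for u
  have Yb: "\<bar>Y u\<bar> \<le> 2" if "u \<in> unit_dirs" for u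
  proof -
    have "\<bar>real_of_int (dotv v u)\<bar> \<le> 1" using dotv_unit_bound[OF v that] by linarith
    moreover have "\<bar>real_of_int (dotv v d)\<bar> \<le> 1" using dotv_unit_bound[OF v d] by linarith
    moreover have "\<bar>(1-p) * real_of_int (dotv v d)\<bar> \<le> 1 * 1"
      unfolding abs_mult using p calculation(2) by (intro mult_mono) auto
    ultimately show ?thesis unfolding Y_def by linarith
  qed
  have gb: "exp (l * Y u) \<le> 1 + l * Y u + 4 * l^2" if "u \<in> unit_dirs" for u
  proof -
    have a: "\<bar>l * Y u\<bar> \<le> 1/2 * 2" unfolding abs_mult using l Yb[OF that] by (intro mult_mono) auto
    have "(l * Y u)^2 = l^2 * (Y u)^2" by (simp add: power_mult_distrib)
    also have "\<dots> \<le> l^2 * 4"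
    proof -
      have "(Y u)^2 \<le> 2^2" using Yb[OF that] by (metis abs_le_square_iff abs_numeral)
      thus ?thesis by (intro mult_left_mono) auto
    qed
    finally have "(l * Y u)^2 \<le> 4 * l^2" by simp
    with exp_quad_bound[of "l * Y u"] a show ?thesis by simp
  qed
  have f0: "(\<integral>\<^sup>+e. ennreal (exp (l * Y e)) \<partial>step_pmf p d)
      = (\<integral>\<^sup>+e. ennreal (exp (l * Y e)) \<partial>pmf_of_set unit_dirs) * ennreal p
        + (\<integral>\<^sup>+e. ennreal (exp (l * Y e)) \<partial>return_pmf d) * ennreal (1 - p)"
    unfolding step_pmf_def nn_integral_bind_pmf using p
    by (subst nn_integral_bernoulli_pmf) auto
  have f1: "(\<integral>\<^sup>+e. ennreal (exp (l * Y e)) \<partial>pmf_of_set unit_dirs)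
      = ennreal ((\<Sum>u\<in>unit_dirs. exp (l * Y u)) / 4)"
  proof -
    have "(\<integral>\<^sup>+e. ennreal (exp (l * Y e)) \<partial>pmf_of_set unit_dirs)
        = (\<Sum>u\<in>unit_dirs. ennreal (exp (l * Y u))) / of_nat (card unit_dirs)"
      by (rule nn_integral_pmf_of_set[OF nonempty_unit_dirs finite_unit_dirs])
    also have "(\<Sum>u\<in>unit_dirs. ennreal (exp (l * Y u))) = ennreal (\<Sum>u\<in>unit_dirs. exp (l * Y u))"
      by (rule sum_ennreal) simp
    also have "(of_nat (card unit_dirs) :: ennreal) = ennreal 4"
      unfolding card_unit_dirs by simp
    also have "ennreal (\<Sum>u\<in>unit_dirs. exp (l * Y u)) / ennreal 4 = ennreal ((\<Sum>u\<in>unit_dirs. exp (l * Y u)) / 4)"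
      by (rule divide_ennreal) (auto intro: sum_nonneg)
    finally show ?thesis .
  qed
  have f2: "(\<integral>\<^sup>+e. ennreal (exp (l * Y e)) \<partial>return_pmf d) = ennreal (exp (l * Y d))"
    by (rule nn_integral_return_pmf) simp
  have int_eq: "(\<integral>\<^sup>+e. ennreal (exp (l * Y e)) \<partial>step_pmf p d)
      = ennreal (p * ((\<Sum>u\<in>unit_dirs. exp (l * Y u)) / 4) + (1 - p) * exp (l * Y d))"
  proof -
    have a: "0 \<le> (\<Sum>u\<in>unit_dirs. exp (l * Y u)) / 4" by (auto intro: sum_nonneg)
    show ?thesis unfolding f0 f1 f2 using p a
      by (simp only: ennreal_mult'[symmetric] ennreal_plus[symmetric] mult_nonneg_nonneg exp_ge_zero diff_ge_0_iff_ge mult.commute)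
  qed
  have sumY: "(\<Sum>u\<in>unit_dirs. Y u) = - 4 * (1-p) * real_of_int (dotv v d)"
  proof -
    have "(\<Sum>u\<in>unit_dirs. Y u) = (\<Sum>u\<in>unit_dirs. real_of_int (dotv v u)) - 4 * ((1-p) * real_of_int (dotv v d))"
      unfolding Y_def by (simp add: sum_subtractf card_unit_dirs)
    also have "(\<Sum>u\<in>unit_dirs. real_of_int (dotv v u)) = 0"
      using sum_dotv_unit_dirs[of v] by (metis of_int_0 of_int_sum)
    finally show ?thesis by (simp add: algebra_simps)
  qed
  have "(\<Sum>u\<in>unit_dirs. exp (l * Y u)) \<le> (\<Sum>u\<in>unit_dirs. 1 + l * Y u + 4 * l^2)"
    by (intro sum_mono gb)
  also have "\<dots> = 4 + l * (\<Sum>u\<in>unit_dirs. Y u) + 16 * l^2"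
    by (simp add: sum.distrib sum_distrib_left card_unit_dirs)
  finally have s1: "(\<Sum>u\<in>unit_dirs. exp (l * Y u)) \<le> 4 + l * (\<Sum>u\<in>unit_dirs. Y u) + 16 * l^2" .
  have "p * ((\<Sum>u\<in>unit_dirs. exp (l * Y u)) / 4) + (1 - p) * exp (l * Y d)
      \<le> p * ((4 + l * (\<Sum>u\<in>unit_dirs. Y u) + 16 * l^2) / 4) + (1 - p) * (1 + l * Y d + 4 * l^2)"
    using p s1 gb[OF d] by (intro add_mono mult_left_mono divide_right_mono) auto
  also have "\<dots> = 1 + 4 * l^2"
    unfolding sumY by (simp add: Y_def field_simps)
  also have "\<dots> \<le> exp (4 * l^2)" using exp_ge_add_one_self by simp
  finally have "p * ((\<Sum>u\<in>unit_dirs. exp (l * Y u)) / 4) + (1 - p) * exp (l * Y d) \<le> exp (4 * l^2)" .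
  hence "(\<integral>\<^sup>+e. ennreal (exp (l * Y e)) \<partial>step_pmf p d) \<le> ennreal (exp (4 * l^2))"
    unfolding int_eq by (intro ennreal_leI)
  thus ?thesis unfolding Y_def .
qed

lemma dotv_add: "dotv v (a + b) = dotv v a + dotv v b"
  by (simp add: dotv_def algebra_simps)

lemma dotv_zero[simp]: "dotv v 0 = 0"
  by (simp add: dotv_def)

lemma incr_mgf:
  assumes p: "0 \<le> p" "p \<le> 1" and v: "v \<in> unit_dirs" and ds: "set ds \<subseteq> unit_dirs" and l: "\<bar>l\<bar> \<le> 1/2"
  shows "(\<integral>\<^sup>+es. ennreal (exp (l * (real_of_int (dotv v (sum_list es)) - (1-p) * real_of_int (dotv v (sum_list ds))))) \<partial>incr_pmf p ds)
         \<le> ennreal (exp (4 * l^2 * real (length ds)))"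
  using ds
proof (induction ds)
  case Nil
  then show ?case by (simp add: nn_integral_return_pmf)
next
  case (Cons d ds)
  define X where "X es = l * (real_of_int (dotv v (sum_list es)) - (1-p) * real_of_int (dotv v (sum_list ds)))" for es
  define Y where "Y e = l * (real_of_int (dotv v e) - (1-p) * real_of_int (dotv v d))" for e
  have d: "d \<in> unit_dirs" and ds: "set ds \<subseteq> unit_dirs" using Cons.prems by auto
  have IH: "(\<integral>\<^sup>+es. ennreal (exp (X es)) \<partial>incr_pmf p ds) \<le> ennreal (exp (4 * l^2 * real (length ds)))"
    using Cons.IH[OF ds] unfolding X_def .
  have split: "l * (real_of_int (dotv v (e + sum_list es)) - (1-p) * real_of_int (dotv v (d + sum_list ds)))
      = Y e + X es" for e es
    unfolding X_def Y_def by (simp add: dotv_add algebra_simps)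
  have "(\<integral>\<^sup>+es. ennreal (exp (l * (real_of_int (dotv v (sum_list es)) - (1-p) * real_of_int (dotv v (sum_list (d # ds)))))) \<partial>incr_pmf p (d # ds))
      = (\<integral>\<^sup>+e. (\<integral>\<^sup>+es. ennreal (exp (Y e)) * ennreal (exp (X es)) \<partial>incr_pmf p ds) \<partial>step_pmf p d)"
    by (simp add: nn_integral_map_pmf split exp_add ennreal_mult)
  also have "\<dots> = (\<integral>\<^sup>+e. ennreal (exp (Y e)) * (\<integral>\<^sup>+es. ennreal (exp (X es)) \<partial>incr_pmf p ds) \<partial>step_pmf p d)"
    by (subst nn_integral_cmult) auto
  also have "\<dots> \<le> (\<integral>\<^sup>+e. ennreal (exp (Y e)) * ennreal (exp (4 * l^2 * real (length ds))) \<partial>step_pmf p d)"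
    by (intro nn_integral_mono mult_left_mono IH) auto
  also have "\<dots> = (\<integral>\<^sup>+e. ennreal (exp (Y e)) \<partial>step_pmf p d) * ennreal (exp (4 * l^2 * real (length ds)))"
    by (subst nn_integral_multc) auto
  also have "\<dots> \<le> ennreal (exp (4 * l^2)) * ennreal (exp (4 * l^2 * real (length ds)))"
    using step_mgf[OF p v d l] unfolding Y_def by (intro mult_right_mono) auto
  also have "\<dots> = ennreal (exp (4 * l^2 * real (length (d # ds))))"
    by (simp add: ennreal_mult[symmetric] exp_add[symmetric] algebra_simps)
  finally show ?case .
qed

lemma incr_chernoff:
  assumes p: "0 \<le> p" "p \<le> 1" and v: "v \<in> unit_dirs" and ds: "set ds \<subseteq> unit_dirs"
    and l: "0 < l" "l \<le> 1/2"
  shows "measure_pmf.prob (incr_pmf p ds)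
      {es. a \<le> real_of_int (dotv v (sum_list es)) - (1-p) * real_of_int (dotv v (sum_list ds))}
      \<le> exp (- l * a + 4 * l^2 * real (length ds))"
proof -
  define f where "f es = real_of_int (dotv v (sum_list es)) - (1-p) * real_of_int (dotv v (sum_list ds))" for es
  have "emeasure (measure_pmf (incr_pmf p ds)) {x \<in> space (measure_pmf (incr_pmf p ds)). f x \<ge> a}
      \<le> ennreal (exp (-l * a)) * (\<integral>\<^sup>+x. ennreal (exp (l * f x)) * indicator (space (measure_pmf (incr_pmf p ds))) x \<partial>measure_pmf (incr_pmf p ds))"
    by (rule Chernoff_ineq_nn_integral_ge) (use l in auto)
  also have "(\<integral>\<^sup>+x. ennreal (exp (l * f x)) * indicator (space (measure_pmf (incr_pmf p ds))) x \<partial>measure_pmf (incr_pmf p ds))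
      = (\<integral>\<^sup>+x. ennreal (exp (l * f x)) \<partial>measure_pmf (incr_pmf p ds))"
    by simp
  also have "\<dots> \<le> ennreal (exp (4 * l^2 * real (length ds)))"
    unfolding f_def by (rule incr_mgf[OF p v ds]) (use l in auto)
  finally have "emeasure (measure_pmf (incr_pmf p ds)) {x. f x \<ge> a}
      \<le> ennreal (exp (-l * a)) * ennreal (exp (4 * l^2 * real (length ds)))"
    by (simp add: mult_left_mono)
  also have "\<dots> = ennreal (exp (- l * a + 4 * l^2 * real (length ds)))"
    by (simp add: ennreal_mult[symmetric] mult_exp_exp)
  finally show ?thesis unfolding f_def
    by (simp add: measure_pmf.emeasure_eq_measure)
qed

lemma incr_chernoff_take:
  assumes p: "0 \<le> p" "p \<le> 1" and v: "v \<in> unit_dirs" and ds: "set ds \<subseteq> unit_dirs"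
    and l: "0 < l" "l \<le> 1/2"
  shows "measure_pmf.prob (incr_pmf p ds)
      {es. a \<le> real_of_int (dotv v (sum_list (take k es))) - (1-p) * real_of_int (dotv v (sum_list (take k ds)))}
      \<le> exp (- l * a + 4 * l^2 * real (length ds))"
proof -
  have ds': "set (take k ds) \<subseteq> unit_dirs" using ds by (meson order.trans set_take_subset)
  have "measure_pmf.prob (incr_pmf p ds)
      {es. a \<le> real_of_int (dotv v (sum_list (take k es))) - (1-p) * real_of_int (dotv v (sum_list (take k ds)))}
    = measure_pmf.prob (map_pmf (take k) (incr_pmf p ds))
      {es. a \<le> real_of_int (dotv v (sum_list es)) - (1-p) * real_of_int (dotv v (sum_list (take k ds)))}"
    by (simp add: vimage_def)
  also have "\<dots> \<le> exp (- l * a + 4 * l^2 * real (length (take k ds)))"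
    unfolding incr_take by (rule incr_chernoff[OF p v ds' l])
  also have "\<dots> \<le> exp (- l * a + 4 * l^2 * real (length ds))"
    by (simp add: mult_left_mono)
  finally show ?thesis .
qed

lemma subpath_up:
  fixes u :: "nat \<Rightarrow> int"
  assumes steps: "\<forall>k<n. \<bar>u (Suc k) - u k\<bar> \<le> 1" and a: "u 0 \<le> lo" "lo \<le> hi" "hi \<le> u n"
  shows "\<exists>k0 k1. k0 \<le> k1 \<and> k1 \<le> n \<and> u k0 = lo \<and> u k1 = hi \<and> (\<forall>k. k0 \<le> k \<and> k \<le> k1 \<longrightarrow> lo \<le> u k \<and> u k \<le> hi)"
proof -
  define k1 where "k1 = (LEAST k. hi \<le> u k)"
  have k1a: "hi \<le> u k1" unfolding k1_def by (rule LeastI[of _ n]) (use a in auto)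
  have k1n: "k1 \<le> n" unfolding k1_def by (rule Least_le) (use a in auto)
  have below: "u k < hi" if "k < k1" for k using not_less_Least[of k "\<lambda>k. hi \<le> u k"] that unfolding k1_def by auto
  have uk1: "u k1 = hi"
  proof (cases k1)
    case 0 then show ?thesis using k1a a by auto
  next
    case (Suc j)
    have "u j < hi" using below Suc by auto
    moreover have "\<bar>u (Suc j) - u j\<bar> \<le> 1" using steps Suc k1n by auto
    ultimately show ?thesis using k1a Suc by auto
  qed
  define S where "S = {k. k \<le> k1 \<and> u k \<le> lo}"
  have S: "finite S" "0 \<in> S" unfolding S_def using a by auto
  define k0 where "k0 = Max S"
  have k0S: "k0 \<in> S" unfolding k0_def using S by (intro Max_in) auto
  have above: "lo < u k" if "k0 < k" "k \<le> k1" for k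
  proof (rule ccontr)
    assume "\<not> lo < u k"
    hence "k \<in> S" unfolding S_def using that by auto
    hence "k \<le> k0" unfolding k0_def using S by auto
    with that show False by auto
  qed
  have uk0: "u k0 = lo"
  proof (cases "k0 = k1")
    case True then show ?thesis using k0S uk1 a unfolding S_def by auto
  next
    case False
    hence lt: "k0 < k1" using k0S unfolding S_def by auto
    have "lo < u (Suc k0)" using above[of "Suc k0"] lt by auto
    moreover have "\<bar>u (Suc k0) - u k0\<bar> \<le> 1" using steps lt k1n by auto
    ultimately show ?thesis using k0S unfolding S_def by auto
  qed
  show ?thesis
  proof (intro exI conjI allI impI)
    show "k0 \<le> k1" using k0S unfolding S_def by auto
    show "k1 \<le> n" by fact
    show "u k0 = lo" by fact
    show "u k1 = hi" by fact
    fix k assume k: "k0 \<le> k \<and> k \<le> k1"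
    show "lo \<le> u k"
      using above[of k] k uk0 by (cases "k = k0") auto
    show "u k \<le> hi"
      using below[of k] k uk1 by (cases "k = k1") auto
  qed
qed

definition pt :: "int \<times> int \<Rightarrow> real^2" where
  "pt q = vector [real_of_int (fst q), real_of_int (snd q)]"

fun poly :: "(nat \<Rightarrow> real^2) \<Rightarrow> nat \<Rightarrow> nat \<Rightarrow> real \<Rightarrow> real^2" where
  "poly f a 0 = linepath (f a) (f a)"
| "poly f a (Suc n) = linepath (f a) (f (Suc a)) +++ poly f (Suc a) n"

lemma poly_basic:
  "path (poly f a n) \<and> pathstart (poly f a n) = f a \<and> pathfinish (poly f a n) = f (a + n)"
  by (induction n arbitrary: a) auto

lemma poly_image:
  assumes "z \<in> path_image (poly f a n)"
  shows "\<exists>i\<le>n. \<exists>j\<le>n. (j = i \<or> j = Suc i) \<and> z \<in> closed_segment (f (a+i)) (f (a+j))"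
  using assms
proof (induction n arbitrary: a)
  case 0
  then show ?case by auto
next
  case (Suc n)
  have "z \<in> closed_segment (f a) (f (Suc a)) \<or> z \<in> path_image (poly f (Suc a) n)"
    using Suc.prems poly_basic[of f "Suc a" n] by (auto simp: path_image_join)
  then show ?case
  proof
    assume "z \<in> closed_segment (f a) (f (Suc a))"
    then show ?thesis by (intro exI[of _ 0] conjI exI[of _ 1]) auto
  next
    assume "z \<in> path_image (poly f (Suc a) n)"
    from Suc.IH[OF this] obtain i j where "i \<le> n" "j \<le> n" "j = i \<or> j = Suc i"
      "z \<in> closed_segment (f (Suc a + i)) (f (Suc a + j))" by blast
    then show ?thesis by (intro exI[of _ "Suc i"] conjI exI[of _ "Suc j"]) auto
  qed
qed

lemma poly_image_subset:
  assumes "convex S" "\<And>i. i \<le> n \<Longrightarrow> f (a + i) \<in> S"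
  shows "path_image (poly f a n) \<subseteq> S"
proof
  fix z assume "z \<in> path_image (poly f a n)"
  from poly_image[OF this] obtain i j where "i \<le> n" "j \<le> n" "z \<in> closed_segment (f (a+i)) (f (a+j))"
    by blast
  with assms show "z \<in> S" by (meson closed_segment_subset subsetD)
qed

lemma segment_component:
  fixes a b z :: "real^2"
  assumes "z \<in> closed_segment a b"
  shows "min (a$i) (b$i) \<le> z$i \<and> z$i \<le> max (a$i) (b$i)"
proof -
  from assms obtain u where u: "0 \<le> u" "u \<le> 1" "z = (1 - u) *\<^sub>R a + u *\<^sub>R b"
    unfolding in_segment by auto
  hence "z$i = (1 - u) * a$i + u * b$i" by simp
  moreover have "(1 - u) * a$i + u * b$i \<in> closed_segment (a$i) (b$i)"
    using u by (auto simp: in_segment)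
  ultimately show ?thesis by (auto simp: closed_segment_eq_real_ivl split: if_splits)
qed

lemma box_lattice:
  fixes A A' :: "int \<times> int"
  assumes "A' - A \<in> insert 0 unit_dirs"
    "min (fst A) (fst A') \<le> x" "x \<le> max (fst A) (fst A')"
    "min (snd A) (snd A') \<le> y" "y \<le> max (snd A) (snd A')"
  shows "(x, y) = A \<or> (x, y) = A'"
  using assms by (cases A; cases A') (auto simp: unit_dirs_def zero_prod_def)

lemma lattice_meet:
  fixes P P' Q Q' :: "int \<times> int"
  assumes P: "P' - P \<in> insert 0 unit_dirs" and Q: "Q' - Q \<in> insert 0 unit_dirs"
    and w1: "w \<in> closed_segment (pt P) (pt P')" and w2: "w \<in> closed_segment (pt Q) (pt Q')"
  shows "P = Q \<or> P = Q' \<or> P' = Q \<or> P' = Q'"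
proof -
  have c: "min (real_of_int (fst A)) (real_of_int (fst A')) \<le> w$1 \<and> w$1 \<le> max (real_of_int (fst A)) (real_of_int (fst A'))
      \<and> min (real_of_int (snd A)) (real_of_int (snd A')) \<le> w$2 \<and> w$2 \<le> max (real_of_int (snd A)) (real_of_int (snd A'))"
    if "w \<in> closed_segment (pt A) (pt A')" for A A'
    using segment_component[OF that, of 1] segment_component[OF that, of 2] by (simp add: pt_def)
  define x where "x = max (min (fst P) (fst P')) (min (fst Q) (fst Q'))"
  define y where "y = max (min (snd P) (snd P')) (min (snd Q) (snd Q'))"
  have xb: "x \<le> min (max (fst P) (fst P')) (max (fst Q) (fst Q'))"
  proof -
    have "real_of_int x \<le> real_of_int (min (max (fst P) (fst P')) (max (fst Q) (fst Q')))"
      using c[OF w1] c[OF w2] unfolding x_def by (simp add: min_def max_def split: if_splits)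
    thus ?thesis by linarith
  qed
  have yb: "y \<le> min (max (snd P) (snd P')) (max (snd Q) (snd Q'))"
  proof -
    have "real_of_int y \<le> real_of_int (min (max (snd P) (snd P')) (max (snd Q) (snd Q')))"
      using c[OF w1] c[OF w2] unfolding y_def by (simp add: min_def max_def split: if_splits)
    thus ?thesis by linarith
  qed
  have "(x, y) = P \<or> (x, y) = P'"
    by (rule box_lattice[OF P]) (use xb yb in \<open>auto simp: x_def y_def\<close>)
  moreover have "(x, y) = Q \<or> (x, y) = Q'"
    by (rule box_lattice[OF Q]) (use xb yb in \<open>auto simp: x_def y_def\<close>)
  ultimately show ?thesis by auto
qed

lemma unit_dirs_abs: "d \<in> unit_dirs \<Longrightarrow> \<bar>fst d\<bar> \<le> 1 \<and> \<bar>snd d\<bar> \<le> 1"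
  by (auto simp: unit_dirs_def)

lemma pt_cbox:
  "pt q \<in> cbox (vector [real_of_int x0, real_of_int y0]) (vector [real_of_int x1, real_of_int y1])
    \<longleftrightarrow> x0 \<le> fst q \<and> fst q \<le> x1 \<and> y0 \<le> snd q \<and> snd q \<le> y1"
  by (simp add: mem_box_cart forall_2 pt_def)

lemma crossing:
  fixes Q R :: "nat \<Rightarrow> int \<times> int" and x0 x1 y0 y1 :: int
  assumes Qs: "\<forall>m<n. Q (Suc m) - Q m \<in> unit_dirs" and Rs: "\<forall>k<n'. R (Suc k) - R k \<in> unit_dirs"
    and Qx: "fst (Q 0) \<le> x0" "x0 \<le> x1" "x1 \<le> fst (Q n)"
    and Qy: "\<forall>m\<le>n. y0 \<le> snd (Q m) \<and> snd (Q m) \<le> y1"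
    and Ry: "snd (R 0) \<le> y0" "y0 \<le> y1" "y1 \<le> snd (R n')"
    and Rx: "\<forall>k\<le>n'. x0 \<le> fst (R k) \<and> fst (R k) \<le> x1"
  shows "\<exists>m\<le>n. \<exists>k\<le>n'. Q m = R k"
proof -
  have "\<forall>k<n. \<bar>fst (Q (Suc k)) - fst (Q k)\<bar> \<le> 1"
    using Qs unit_dirs_abs by fastforce
  from subpath_up[OF this Qx] obtain m0 m1 where m: "m0 \<le> m1" "m1 \<le> n" "fst (Q m0) = x0" "fst (Q m1) = x1"
    "\<forall>k. m0 \<le> k \<and> k \<le> m1 \<longrightarrow> x0 \<le> fst (Q k) \<and> fst (Q k) \<le> x1" by blast
  have "\<forall>k<n'. \<bar>snd (R (Suc k)) - snd (R k)\<bar> \<le> 1"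
    using Rs unit_dirs_abs by fastforce
  from subpath_up[OF this Ry] obtain k0 k1 where k: "k0 \<le> k1" "k1 \<le> n'" "snd (R k0) = y0" "snd (R k1) = y1"
    "\<forall>k. k0 \<le> k \<and> k \<le> k1 \<longrightarrow> y0 \<le> snd (R k) \<and> snd (R k) \<le> y1" by blast
  define f where "f = poly (\<lambda>m. pt (Q m)) m0 (m1 - m0)"
  define g where "g = poly (\<lambda>k. pt (R k)) k0 (k1 - k0)"
  define a :: "real^2" where "a = vector [real_of_int x0, real_of_int y0]"
  define b :: "real^2" where "b = vector [real_of_int x1, real_of_int y1]"
  have fb: "path f" "pathstart f = pt (Q m0)" "pathfinish f = pt (Q m1)"
    using poly_basic[of "\<lambda>m. pt (Q m)" m0 "m1 - m0"] m(1) unfolding f_def by auto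
  have gb: "path g" "pathstart g = pt (R k0)" "pathfinish g = pt (R k1)"
    using poly_basic[of "\<lambda>k. pt (R k)" k0 "k1 - k0"] k(1) unfolding g_def by auto
  have fi: "path_image f \<subseteq> cbox a b"
    unfolding f_def a_def b_def
  proof (rule poly_image_subset[OF convex_box(1)])
    fix i assume "i \<le> m1 - m0"
    thus "pt (Q (m0 + i)) \<in> cbox (vector [real_of_int x0, real_of_int y0]) (vector [real_of_int x1, real_of_int y1])"
      unfolding pt_cbox using m Qy by auto
  qed
  have gi: "path_image g \<subseteq> cbox a b"
    unfolding g_def a_def b_def
  proof (rule poly_image_subset[OF convex_box(1)])
    fix i assume "i \<le> k1 - k0"
    thus "pt (R (k0 + i)) \<in> cbox (vector [real_of_int x0, real_of_int y0]) (vector [real_of_int x1, real_of_int y1])"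
      unfolding pt_cbox using k Rx by auto
  qed
  obtain z where z1: "z \<in> path_image f" and z2: "z \<in> path_image g"
  proof (rule fashoda[OF fb(1) gb(1) fi gi])
    show "pathstart f $ 1 = a $ 1" "pathfinish f $ 1 = b $ 1" "pathstart g $ 2 = a $ 2" "pathfinish g $ 2 = b $ 2"
      using fb gb m k by (auto simp: a_def b_def pt_def)
  qed
  from poly_image[OF z1[unfolded f_def]] obtain i j where ij: "i \<le> m1 - m0" "j \<le> m1 - m0" "j = i \<or> j = Suc i"
    "z \<in> closed_segment (pt (Q (m0 + i))) (pt (Q (m0 + j)))" by blast
  from poly_image[OF z2[unfolded g_def]] obtain i' j' where ij': "i' \<le> k1 - k0" "j' \<le> k1 - k0" "j' = i' \<or> j' = Suc i'"
    "z \<in> closed_segment (pt (R (k0 + i'))) (pt (R (k0 + j')))" by blast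
  have d1: "Q (m0 + j) - Q (m0 + i) \<in> insert 0 unit_dirs"
    using ij(3) Qs ij(2) m(2) by (cases "j = i") auto
  have d2: "R (k0 + j') - R (k0 + i') \<in> insert 0 unit_dirs"
    using ij'(3) Rs ij'(2) k(2) by (cases "j' = i'") auto
  have bnd: "m0 + i \<le> n" "m0 + j \<le> n" "k0 + i' \<le> n'" "k0 + j' \<le> n'"
    using ij ij' m k by auto
  from lattice_meet[OF d1 d2 ij(4) ij'(4)] bnd show ?thesis
    by blast
qed

definition sline :: "nat \<Rightarrow> nat \<Rightarrow> nat \<Rightarrow> nat \<Rightarrow> (int \<times> int) list" where
  "sline N W G i = replicate (2 * W) (if even i then (1, 0) else (-1, 0))
     @ (if i + 1 < N then replicate G (0, 1) else [])"

definition sweep3 :: "nat \<Rightarrow> nat \<Rightarrow> nat \<Rightarrow> (int \<times> int) list" where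
  "sweep3 N W G = concat (map (sline N W G) [0..<N])"

lemma sum_replicate_pair: "sum_list (replicate m (a, b)) = (int m * a, int m * b)"
  by (induction m) (auto simp: algebra_simps zero_prod_def)

lemma sline_unit: "set (sline N W G i) \<subseteq> unit_dirs"
  by (auto simp: sline_def unit_dirs_def)

lemma sweep3_unit: "set (sweep3 N W G) \<subseteq> unit_dirs"
  by (auto simp: sweep3_def dest: subsetD[OF sline_unit])

lemma prefix_lines:
  assumes "i < N"
  shows "length (concat (map (sline N W G) [0..<i])) = i * (2 * W + G)
    \<and> sum_list (concat (map (sline N W G) [0..<i])) = (if odd i then int (2 * W) else 0, int (i * G))"
  using assms
proof (induction i)
  case 0
  then show ?case by (simp add: zero_prod_def)
next
  case (Suc i)
  have "i + 1 < N" using Suc.prems by simp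
  hence sl: "sline N W G i = replicate (2 * W) (if even i then (1, 0) else (-1, 0)) @ replicate G (0, 1)"
    by (simp add: sline_def)
  show ?case using Suc.IH Suc.prems
    by (auto simp: sl sum_replicate_pair algebra_simps)
qed

lemma sweep3_split:
  assumes "i < N"
  shows "sweep3 N W G = concat (map (sline N W G) [0..<i]) @ sline N W G i @ concat (map (sline N W G) [Suc i..<N])"
proof -
  have "[0..<N] = [0..<i] @ i # [Suc i..<N]"
    using assms by (metis le_add1 less_imp_le_nat upt_add_eq_append upt_conv_Cons add_0 le_add_diff_inverse)
  thus ?thesis unfolding sweep3_def by simp
qed

lemma sweep3_prefix:
  assumes "i < N" "m \<le> 2 * W"
  shows "sum_list (take (i * (2 * W + G) + m) (sweep3 N W G))
      = (if odd i then int (2 * W) else 0, int (i * G)) + (if even i then (int m, 0) else (- int m, 0))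
    \<and> i * (2 * W + G) + m \<le> length (sweep3 N W G)"
proof -
  note pl = prefix_lines[OF assms(1), of W G]
  have t: "take m (sline N W G i) = replicate m (if even i then (1, 0) else (-1, 0))"
    using assms(2) by (simp add: sline_def)
  have "take (i * (2 * W + G) + m) (sweep3 N W G) = concat (map (sline N W G) [0..<i]) @ take m (sline N W G i)"
    unfolding sweep3_split[OF assms(1)] using pl assms(2) by (simp add: sline_def)
  moreover have "length (sweep3 N W G) \<ge> i * (2 * W + G) + 2 * W"
    unfolding sweep3_split[OF assms(1)] using pl by (simp add: sline_def)
  ultimately show ?thesis using pl assms(2) t
    by (auto simp: sum_replicate_pair)
qed

lemma sum_take_Suc:
  "n < length (xs :: (int \<times> int) list) \<Longrightarrow> sum_list (take (Suc n) xs) - sum_list (take n xs) = xs ! n"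
  by (simp add: take_Suc_conv_app_nth add_diff_cancel_left')

lemma sum_fst_bound:
  "set xs \<subseteq> unit_dirs \<Longrightarrow> \<bar>fst (sum_list xs)\<bar> \<le> int (length xs)"
proof (induction xs)
  case Nil then show ?case by simp
next
  case (Cons a xs)
  have "\<bar>fst a\<bar> \<le> 1" using Cons.prems unit_dirs_abs by auto
  with Cons show ?case by auto
qed

lemma phase_instr_split:
  assumes "z \<le> sweep_G p0 t + sweep_c t"
  shows "\<exists>T. phase_instr p0 A B t z =
     (replicate (sweep_W p0 A t) (-1, 0) @ replicate (sweep_H p0 B t) (0, -1))
     @ (take z (replicate (sweep_G p0 t + sweep_c t) (0, 1))
     @ (sweep3 (sweep_N p0 B t) (sweep_W p0 A t) (sweep_G p0 t) @ T))"
  using assms unfolding phase_instr_def Let_def sweep3_def sline_def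
  by (simp add: min_def)

lemma unit_dirs_uminus: "d \<in> unit_dirs \<Longrightarrow> - d \<in> unit_dirs"
  by (auto simp: unit_dirs_def)

lemma good_visit:
  fixes W H G N M :: nat and mu eta :: real and y h :: "int \<times> int" and e1 r e3 :: "(int \<times> int) list"
  assumes r: "length r = M" "set r \<subseteq> unit_dirs"
    and e3: "length e3 = length (sweep3 N W G)" "set e3 \<subseteq> unit_dirs"
    and G1x: "\<bar>real_of_int (fst (y + sum_list e1)) - (real_of_int (fst y) - mu * W)\<bar> \<le> eta"
    and G1y: "\<bar>real_of_int (snd (y + sum_list e1)) - (real_of_int (snd y) - mu * H)\<bar> \<le> eta"
    and G2: "mu * M - eta \<le> real_of_int (snd (sum_list r))"
    and G3: "\<forall>j \<le> length (sweep3 N W G).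
       \<bar>real_of_int (fst (sum_list (take j e3))) - mu * real_of_int (fst (sum_list (take j (sweep3 N W G))))\<bar> \<le> eta
     \<and> \<bar>real_of_int (snd (sum_list (take j e3))) - mu * real_of_int (snd (sum_list (take j (sweep3 N W G))))\<bar> \<le> eta"
    and mu: "0 < mu" and eta: "0 \<le> eta" and Gpos: "0 < G" and MG: "G \<le> M" "3 * eta \<le> mu * (real M - real G)"
    and NG: "2 * H \<le> N * G"
    and Cy1: "\<bar>real_of_int (snd h)\<bar> + \<bar>real_of_int (snd y)\<bar> + mu * M \<le> mu * H"
    and Cy2: "\<bar>real_of_int (snd h)\<bar> + \<bar>real_of_int (snd y)\<bar> + 3 * eta \<le> mu * H"
    and Cx: "\<bar>real_of_int (fst h)\<bar> + \<bar>real_of_int (fst y)\<bar> + 2 * eta + M \<le> mu * W"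
  shows "\<exists>z \<le> M. \<exists>j \<le> length e3. y + sum_list e1 + sum_list (take z r) + sum_list (take j e3) = h"
proof -
  define P3 where "P3 = sweep3 N W G"
  define U where "U = y + sum_list e1"
  define D where "D = h - U"
  define Dy where "Dy = real_of_int (snd D)"
  define Dx where "Dx = real_of_int (fst D)"
  have Dy_lo: "real_of_int (snd h) - real_of_int (snd y) + mu * H - eta \<le> Dy"
    and Dy_hi: "Dy \<le> real_of_int (snd h) - real_of_int (snd y) + mu * H + eta"
    using G1y unfolding Dy_def D_def U_def by auto
  have Dx_lo: "real_of_int (fst h) - real_of_int (fst y) + mu * W - eta \<le> Dx"
    and Dx_hi: "Dx \<le> real_of_int (fst h) - real_of_int (fst y) + mu * W + eta"
    using G1x unfolding Dx_def D_def U_def by auto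
  define low where "low = Dy - mu * M + 2 * eta"
  have low0: "eta \<le> low" unfolding low_def using Dy_lo Cy1 abs_ge_self[of "real_of_int (snd h)"] abs_ge_minus_self[of "real_of_int (snd h)"] abs_ge_self[of "real_of_int (snd y)"] abs_ge_minus_self[of "real_of_int (snd y)"] by linarith
  have muG: "0 < mu * G" using mu Gpos by simp
  define iI where "iI = \<lceil>low / (mu * G)\<rceil>"
  have "0 \<le> low / (mu * G)" using low0 eta muG by simp
  hence iI0: "0 \<le> iI" unfolding iI_def by simp
  define i where "i = nat iI"
  have ri: "real i = real_of_int iI" unfolding i_def using iI0 by simp
  have i_lo: "low \<le> mu * G * real i"
  proof -
    have "low / (mu * G) \<le> real i" unfolding ri iI_def by (rule le_of_int_ceiling)
    thus ?thesis using muG by (simp add: divide_le_eq mult.commute)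
  qed
  have i_hi: "mu * G * real i < low + mu * G"
  proof -
    have "real i < low / (mu * G) + 1" unfolding ri iI_def using ceiling_correct[of "low / (mu * G)"] by linarith
    hence "mu * G * real i < mu * G * (low / (mu * G) + 1)" by (rule mult_strict_left_mono[OF _ muG])
    also have "mu * G * (low / (mu * G) + 1) = low + mu * G" using mu Gpos by (simp add: field_simps)
    finally show ?thesis .
  qed
  have band_hi: "mu * G * real i + eta \<le> Dy"
  proof -
    have "mu * G * real i < Dy - mu * (real M - real G) + 2 * eta" using i_hi unfolding low_def by (simp add: algebra_simps)
    thus ?thesis using MG by linarith
  qed
  have iN: "i < N"
  proof -
    have "low \<le> \<bar>real_of_int (snd h)\<bar> + \<bar>real_of_int (snd y)\<bar> + 3 * eta + mu * H - mu * M"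
      unfolding low_def using Dy_hi abs_ge_self[of "real_of_int (snd h)"] abs_ge_minus_self[of "real_of_int (snd h)"] abs_ge_self[of "real_of_int (snd y)"] abs_ge_minus_self[of "real_of_int (snd y)"] by linarith
    also have "\<dots> \<le> 2 * (mu * H) - mu * M" using Cy2 by linarith
    also have "\<dots> \<le> mu * (real N * G) - mu * G"
    proof -
      have "2 * real H \<le> real N * real G" using NG by (metis of_nat_le_iff of_nat_mult of_nat_numeral)
      hence "mu * (2 * real H) \<le> mu * (real N * real G)" using mu by (intro mult_left_mono) auto
      moreover have "mu * G \<le> mu * M" using MG mu by (intro mult_left_mono) auto
      ultimately show ?thesis by (simp add: algebra_simps)
    qed
    finally have "mu * G * real i < mu * G * real N" using i_hi by (simp add: algebra_simps)
    hence "real i < real N" using mult_less_cancel_left_pos[OF muG] by blast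
    thus ?thesis by simp
  qed
  define s where "s = i * (2 * W + G)"
  note pref = sweep3_prefix[OF iN, of _ W G, folded s_def]
  have slen: "s + 2 * W \<le> length e3" using pref[of "2 * W"] e3(1) by simp
  have nx: "\<bar>real_of_int (fst (sum_list (take (s + m) e3))) - mu * ((if odd i then real (2 * W) else 0) + (if even i then real m else - real m))\<bar> \<le> eta"
    and ny: "\<bar>real_of_int (snd (sum_list (take (s + m) e3))) - mu * real (i * G)\<bar> \<le> eta"
    if "m \<le> 2 * W" for m
  proof -
    have j: "s + m \<le> length P3" using pref[OF that] unfolding P3_def by simp
    have eq: "sum_list (take (s + m) P3) = (if odd i then int (2 * W) else 0, int (i * G)) + (if even i then (int m, 0) else (- int m, 0))"
      using pref[OF that] unfolding P3_def by simp
    from G3[rule_format, OF j[unfolded P3_def]] show "\<bar>real_of_int (fst (sum_list (take (s + m) e3))) - mu * ((if odd i then real (2 * W) else 0) + (if even i then real m else - real m))\<bar> \<le> eta"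
      using eq unfolding P3_def by (cases "odd i") auto
    from G3[rule_format, OF j[unfolded P3_def]] show "\<bar>real_of_int (snd (sum_list (take (s + m) e3))) - mu * real (i * G)\<bar> \<le> eta"
      using eq unfolding P3_def by (cases "odd i") auto
  qed
  define x0 where "x0 = fst D - int M"
  define x1 where "x1 = fst D + int M"
  define y0 where "y0 = snd D - snd (sum_list r)"
  define y1 where "y1 = snd D"
  have x0_ge: "eta \<le> real_of_int x0" unfolding x0_def using Dx_lo Cx unfolding Dx_def
    using abs_ge_self[of "real_of_int (fst h)"] abs_ge_minus_self[of "real_of_int (fst h)"] abs_ge_self[of "real_of_int (fst y)"] abs_ge_minus_self[of "real_of_int (fst y)"] by simp
  have x1_le: "real_of_int x1 \<le> 2 * mu * W - eta" unfolding x1_def using Dx_hi Cx unfolding Dx_def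
    using abs_ge_self[of "real_of_int (fst h)"] abs_ge_minus_self[of "real_of_int (fst h)"] abs_ge_self[of "real_of_int (fst y)"] abs_ge_minus_self[of "real_of_int (fst y)"] by simp
  have y0_le: "real_of_int y0 \<le> Dy - mu * M + eta" unfolding y0_def Dy_def using G2 by simp
  obtain jf :: "nat \<Rightarrow> nat" where jf_le: "\<forall>m \<le> 2 * W. jf m \<le> length e3"
    and jf_step: "\<forall>m < 2 * W. sum_list (take (jf (Suc m)) e3) - sum_list (take (jf m) e3) \<in> unit_dirs"
    and jf_x0: "real_of_int (fst (sum_list (take (jf 0) e3))) \<le> eta"
    and jf_x1: "2 * mu * W - eta \<le> real_of_int (fst (sum_list (take (jf (2 * W)) e3)))"
    and jf_y: "\<forall>m \<le> 2 * W. \<bar>real_of_int (snd (sum_list (take (jf m) e3))) - mu * real (i * G)\<bar> \<le> eta"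
  proof (cases "odd i")
    case False
    show ?thesis
    proof (rule that[of "\<lambda>m. s + m"])
      show "\<forall>m\<le>2 * W. s + m \<le> length e3" using slen by auto
      show "\<forall>m<2 * W. sum_list (take (s + Suc m) e3) - sum_list (take (s + m) e3) \<in> unit_dirs"
      proof (intro allI impI)
        fix m assume m: "m < 2 * W"
        hence "s + m < length e3" using slen by auto
        thus "sum_list (take (s + Suc m) e3) - sum_list (take (s + m) e3) \<in> unit_dirs"
          using sum_take_Suc[of "s + m" e3] e3(2) by (auto simp: nth_mem subsetD)
      qed
      show "real_of_int (fst (sum_list (take (s + 0) e3))) \<le> eta" using nx[of 0] False by simp
      show "2 * mu * W - eta \<le> real_of_int (fst (sum_list (take (s + 2 * W) e3)))" using nx[of "2 * W"] False by simp
      show "\<forall>m\<le>2 * W. \<bar>real_of_int (snd (sum_list (take (s + m) e3))) - mu * real (i * G)\<bar> \<le> eta"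
        using ny by auto
    qed
  next
    case True
    show ?thesis
    proof (rule that[of "\<lambda>m. s + (2 * W - m)"])
      show "\<forall>m\<le>2 * W. s + (2 * W - m) \<le> length e3" using slen by auto
      show "\<forall>m<2 * W. sum_list (take (s + (2 * W - Suc m)) e3) - sum_list (take (s + (2 * W - m)) e3) \<in> unit_dirs"
      proof (intro allI impI)
        fix m assume m: "m < 2 * W"
        define q where "q = s + (2 * W - Suc m)"
        have q: "q < length e3" "s + (2 * W - m) = Suc q" using slen m unfolding q_def by auto
        have "sum_list (take (s + (2 * W - Suc m)) e3) - sum_list (take (s + (2 * W - m)) e3) = - (e3 ! q)"
          using sum_take_Suc[OF q(1)] unfolding q(2) q_def[symmetric] by (simp add: algebra_simps)
        thus "sum_list (take (s + (2 * W - Suc m)) e3) - sum_list (take (s + (2 * W - m)) e3) \<in> unit_dirs"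
          using e3(2) q(1) by (auto intro!: unit_dirs_uminus simp: nth_mem subsetD)
      qed
      show "real_of_int (fst (sum_list (take (s + (2 * W - 0)) e3))) \<le> eta" using nx[of "2 * W"] True by simp
      show "2 * mu * W - eta \<le> real_of_int (fst (sum_list (take (s + (2 * W - 2 * W)) e3)))" using nx[of 0] True by simp
      show "\<forall>m\<le>2 * W. \<bar>real_of_int (snd (sum_list (take (s + (2 * W - m)) e3))) - mu * real (i * G)\<bar> \<le> eta"
      proof (intro allI impI)
        fix m assume "m \<le> 2 * W"
        thus "\<bar>real_of_int (snd (sum_list (take (s + (2 * W - m)) e3))) - mu * real (i * G)\<bar> \<le> eta"
          using ny[of "2 * W - m"] by simp
      qed
    qed
  qed
  define Q where "Q m = sum_list (take (jf m) e3)" for m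
  define R where "R k = D - sum_list (take (M - k) r)" for k
  have "\<exists>m\<le>2 * W. \<exists>k\<le>M. Q m = R k"
  proof (rule crossing)
    show "\<forall>m<2 * W. Q (Suc m) - Q m \<in> unit_dirs" using jf_step unfolding Q_def by auto
    show "\<forall>k<M. R (Suc k) - R k \<in> unit_dirs"
    proof (intro allI impI)
      fix k assume k: "k < M"
      define q where "q = M - Suc k"
      have q: "q < length r" "M - k = Suc q" using k r(1) unfolding q_def by auto
      have "R (Suc k) - R k = r ! q"
        unfolding R_def q(2) q_def[symmetric] using sum_take_Suc[OF q(1)] by (simp add: algebra_simps)
      thus "R (Suc k) - R k \<in> unit_dirs" using q(1) r(2) by (auto simp: nth_mem subsetD)
    qed
    show "fst (Q 0) \<le> x0" using jf_x0 x0_ge unfolding Q_def by linarith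
    show "x0 \<le> x1" unfolding x0_def x1_def by simp
    show "x1 \<le> fst (Q (2 * W))" using jf_x1 x1_le unfolding Q_def by linarith
    show "\<forall>m\<le>2 * W. y0 \<le> snd (Q m) \<and> snd (Q m) \<le> y1"
    proof (intro allI impI)
      fix m assume m: "m \<le> 2 * W"
      have a: "\<bar>real_of_int (snd (Q m)) - mu * real (i * G)\<bar> \<le> eta" using jf_y m unfolding Q_def by auto
      have b: "mu * real (i * G) = mu * G * real i" by simp
      have "real_of_int y0 \<le> real_of_int (snd (Q m))" using a y0_le i_lo unfolding low_def b by linarith
      moreover have "real_of_int (snd (Q m)) \<le> real_of_int y1" using a band_hi unfolding y1_def Dy_def b by linarith
      ultimately show "y0 \<le> snd (Q m) \<and> snd (Q m) \<le> y1" by simp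
    qed
    show "snd (R 0) \<le> y0" unfolding R_def y0_def using r(1) by simp
    show "y0 \<le> y1"
    proof -
      have "mu * (real M - real G) \<le> mu * M" using mu by (simp add: algebra_simps)
      hence "0 \<le> mu * M - eta" using MG eta by linarith
      thus ?thesis using G2 unfolding y0_def y1_def by simp
    qed
    show "y1 \<le> snd (R M)" unfolding R_def y1_def by simp
    show "\<forall>k\<le>M. x0 \<le> fst (R k) \<and> fst (R k) \<le> x1"
    proof (intro allI impI)
      fix k assume k: "k \<le> M"
      have "set (take (M - k) r) \<subseteq> unit_dirs" using r(2) by (meson order.trans set_take_subset)
      from sum_fst_bound[OF this] have "\<bar>fst (sum_list (take (M - k) r))\<bar> \<le> int M"
        using r(1) by simp
      thus "x0 \<le> fst (R k) \<and> fst (R k) \<le> x1" unfolding R_def x0_def x1_def by (simp add: abs_le_iff)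
    qed
  qed
  then obtain m k where mk: "m \<le> 2 * W" "k \<le> M" "Q m = R k" by blast
  show ?thesis
  proof (intro exI conjI)
    show "M - k \<le> M" by simp
    show "jf m \<le> length e3" using jf_le mk by auto
    show "y + sum_list e1 + sum_list (take (M - k) r) + sum_list (take (jf m) e3) = h"
      using mk(3) unfolding Q_def R_def D_def U_def by (simp add: algebra_simps)
  qed
qed

lemma prob_bind_pmf_of_set:
  assumes "finite S" "S \<noteq> {}"
  shows "measure_pmf.prob (bind_pmf (pmf_of_set S) f) X = (\<Sum>z\<in>S. measure_pmf.prob (f z) X) / card S"
proof -
  have "ennreal (measure_pmf.prob (bind_pmf (pmf_of_set S) f) X) = emeasure (measure_pmf (bind_pmf (pmf_of_set S) f)) X"
    by (simp add: measure_pmf.emeasure_eq_measure)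
  also have "\<dots> = (\<integral>\<^sup>+z. emeasure (measure_pmf (f z)) X \<partial>pmf_of_set S)"
    by simp
  also have "\<dots> = (\<Sum>z\<in>S. emeasure (measure_pmf (f z)) X) / of_nat (card S)"
    by (rule nn_integral_pmf_of_set[OF assms(2,1)])
  also have "(\<Sum>z\<in>S. emeasure (measure_pmf (f z)) X) = ennreal (\<Sum>z\<in>S. measure_pmf.prob (f z) X)"
    by (simp add: measure_pmf.emeasure_eq_measure)
  also have "(of_nat (card S) :: ennreal) = ennreal (real (card S))"
    by (rule ennreal_of_nat_eq_real_of_nat)
  also have "ennreal (\<Sum>z\<in>S. measure_pmf.prob (f z) X) / ennreal (real (card S))
      = ennreal ((\<Sum>z\<in>S. measure_pmf.prob (f z) X) / real (card S))"
    using assms by (intro divide_ennreal) (auto intro: sum_nonneg simp: card_gt_0_iff)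
  finally show ?thesis
    by (subst (asm) ennreal_inj) (auto intro!: divide_nonneg_nonneg sum_nonneg)
qed

lemma prob_pair_fst:
  "measure_pmf.prob (pair_pmf A B) {\<omega>. P (fst \<omega>)} = measure_pmf.prob A {a. P a}"
proof -
  have "measure_pmf.prob A {a. P a} = measure_pmf.prob (map_pmf fst (pair_pmf A B)) {a. P a}"
    by (simp add: map_fst_pair_pmf)
  also have "\<dots> = measure_pmf.prob (pair_pmf A B) {\<omega>. P (fst \<omega>)}"
    by (simp add: vimage_def)
  finally show ?thesis by simp
qed

lemma prob_pair_snd:
  "measure_pmf.prob (pair_pmf A B) {\<omega>. P (snd \<omega>)} = measure_pmf.prob B {a. P a}"
proof -
  have "measure_pmf.prob B {a. P a} = measure_pmf.prob (map_pmf snd (pair_pmf A B)) {a. P a}"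
    by (simp add: map_snd_pair_pmf)
  also have "\<dots> = measure_pmf.prob (pair_pmf A B) {\<omega>. P (snd \<omega>)}"
    by (simp add: vimage_def)
  finally show ?thesis by simp
qed

lemma visits_append: "visits y x u \<Longrightarrow> visits y x (u @ d)"
proof -
  assume "visits y x u"
  then obtain k where k: "k \<le> length u" "y + sum_list (take k u) = x" unfolding visits_def by auto
  have "take k (u @ d) = take k u" using k(1) by simp
  thus ?thesis unfolding visits_def using k by (intro exI[of _ k]) auto
qed

lemma Pz_bound:
  assumes split: "instr = P1 @ (take z Rf @ (P3 @ T))"
  shows "measure_pmf.prob (pair_pmf (incr_pmf p P1) (pair_pmf (incr_pmf p Rf) (incr_pmf p P3)))
           {\<omega>. visits y x (fst \<omega> @ take z (fst (snd \<omega>)) @ snd (snd \<omega>))}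
         \<le> measure_pmf.prob (incr_pmf p instr) {es. visits y x es}"
proof -
  define \<Omega> where "\<Omega> = pair_pmf (incr_pmf p P1) (pair_pmf (incr_pmf p Rf) (incr_pmf p P3))"
  define X where "X = incr_pmf p (P1 @ (take z Rf @ P3))"
  have X: "X = map_pmf (\<lambda>\<omega>. fst \<omega> @ take z (fst (snd \<omega>)) @ snd (snd \<omega>)) \<Omega>"
    unfolding X_def \<Omega>_def incr_append incr_take[symmetric]
    by (simp add: pair_map_pmf1 pair_map_pmf2 map_pmf_comp case_prod_beta)
  have "instr = (P1 @ (take z Rf @ P3)) @ T" using split by simp
  hence I: "incr_pmf p instr = map_pmf (\<lambda>(a, b). a @ b) (pair_pmf X (incr_pmf p T))"
    unfolding X_def by (simp only: incr_append)
  have "measure_pmf.prob \<Omega> {\<omega>. visits y x (fst \<omega> @ take z (fst (snd \<omega>)) @ snd (snd \<omega>))}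
      = measure_pmf.prob X {u. visits y x u}"
    unfolding X by (simp add: vimage_def)
  also have "\<dots> = measure_pmf.prob (pair_pmf X (incr_pmf p T)) {\<omega>. visits y x (fst \<omega>)}"
    by (simp add: prob_pair_fst)
  also have "\<dots> \<le> measure_pmf.prob (pair_pmf X (incr_pmf p T)) {\<omega>. visits y x (fst \<omega> @ snd \<omega>)}"
    by (intro measure_pmf.finite_measure_mono) (auto intro: visits_append)
  also have "\<dots> = measure_pmf.prob (incr_pmf p instr) {es. visits y x es}"
    unfolding I by (simp add: vimage_def case_prod_beta)
  finally show ?thesis unfolding \<Omega>_def .
qed

definition devv :: "real \<Rightarrow> int \<times> int \<Rightarrow> (int \<times> int) list \<Rightarrow> (int \<times> int) list \<Rightarrow> real" where
  "devv p v es ds = real_of_int (dotv v (sum_list es)) - (1-p) * real_of_int (dotv v (sum_list ds))"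

definition "Wr p0 A x = (1 / (1 - p0)) * A * sqrt x"
definition "Gr p0 x = (1 / (1 - p0)) * (sqrt x / ln x)"
definition "cr x = x powr (1/3)"
definition "Lbf p0 A B x = (Wr p0 A x + Wr p0 B x + 2) + (Gr p0 x + cr x + 2)
     + (2 * (Wr p0 B x + 1) / Gr p0 x + 1) * (2 * Wr p0 A x + Gr p0 x + 3)"
definition "etaf p x = (1 - p) * cr x / 4"
definition "deltaf p p0 A B x = (4 * Lbf p0 A B x + 9) * exp (- (etaf p x * etaf p x) / (16 * Lbf p0 A B x))"

lemma chernoff_exp_bound:
  fixes eta L n :: real
  assumes "0 < eta" "0 < L" "eta \<le> 4 * L" "n \<le> L" "0 \<le> n"
  shows "exp (- (eta / (8 * L)) * eta + 4 * (eta / (8 * L))^2 * n) \<le> exp (- (eta * eta) / (16 * L))"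
proof -
  have "4 * (eta / (8 * L))^2 * n \<le> 4 * (eta / (8 * L))^2 * L"
    using assms by (intro mult_left_mono) auto
  also have "\<dots> = eta * eta / (16 * L)" using assms by (simp add: power2_eq_square field_simps)
  finally have "- (eta / (8 * L)) * eta + 4 * (eta / (8 * L))^2 * n \<le> - (eta * eta) / (8 * L) + eta * eta / (16 * L)"
    by (simp add: field_simps)
  also have "\<dots> = - (eta * eta) / (16 * L)" using assms by (simp add: field_simps)
  finally show ?thesis by simp
qed

lemma length_sweep3: "length (sweep3 N W G) \<le> N * (2 * W + G)"
proof -
  have "length (sweep3 N W G) = (\<Sum>i\<leftarrow>[0..<N]. length (sline N W G i))"
    unfolding sweep3_def by (simp add: length_concat comp_def)
  also have "\<dots> \<le> (\<Sum>i\<leftarrow>[0..<N]. 2 * W + G)"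
    by (intro sum_list_mono) (simp add: sline_def)
  also have "\<dots> = N * (2 * W + G)" by (simp add: sum_list_triv)
  finally show ?thesis .
qed

lemma nat_ceiling_bounds:
  fixes r :: real assumes "0 \<le> r"
  shows "r \<le> real (nat \<lceil>r\<rceil>)" "real (nat \<lceil>r\<rceil>) \<le> r + 1"
proof -
  have "real (nat \<lceil>r\<rceil>) = real_of_int \<lceil>r\<rceil>" using assms by simp
  thus "r \<le> real (nat \<lceil>r\<rceil>)" "real (nat \<lceil>r\<rceil>) \<le> r + 1"
    using ceiling_correct[of r] by linarith+
qed

lemma dotv_simps:
  "dotv (1, 0) x = fst x" "dotv (-1, 0) x = - fst x" "dotv (0, 1) x = snd x" "dotv (0, -1) x = - snd x"
  by (auto simp: dotv_def)

lemma unit_dirs_mem: "(1, 0) \<in> unit_dirs" "(-1, 0) \<in> unit_dirs" "(0, 1) \<in> unit_dirs" "(0, -1) \<in> unit_dirs"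
  by (auto simp: unit_dirs_def)

lemma abs_from_dev:
  fixes u m eta :: real
  assumes "u - m < eta" "- u - (- m) < eta"
  shows "\<bar>u - m\<bar> \<le> eta"
  using assms by linarith

lemma key:
  fixes p p0 A B :: real and h y :: "int \<times> int" and t :: nat
  assumes p: "0 < p" "p < p0" "p0 < 1" and AB: "A > 0" "B > 0" and t2: "2 \<le> t"
    and ca: "\<bar>real_of_int (snd h)\<bar> + B * sqrt t + (1-p) * (Gr p0 t + cr t + 2) \<le> (1-p) * Wr p0 B t"
    and cb: "\<bar>real_of_int (snd h)\<bar> + B * sqrt t + 3 * etaf p t \<le> (1-p) * Wr p0 B t"
    and cc: "\<bar>real_of_int (fst h)\<bar> + A * sqrt t + 2 * etaf p t + (Gr p0 t + cr t + 2) \<le> (1-p) * Wr p0 A t"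
    and cd: "etaf p t \<le> 4 * Lbf p0 A B t"
    and box: "\<bar>real_of_int (fst y)\<bar> \<le> A * sqrt t" "\<bar>real_of_int (snd y)\<bar> \<le> B * sqrt t"
  shows "(1 - deltaf p p0 A B t) / (real (sweep_G p0 t + sweep_c t) + 1)
      \<le> measure_pmf.prob (phase_pmf p p0 A B t) {es. visits y h es}"
proof -
  define W where "W = sweep_W p0 A t"
  define H where "H = sweep_H p0 B t"
  define G where "G = sweep_G p0 t"
  define N where "N = sweep_N p0 B t"
  define c where "c = sweep_c t"
  define M where "M = G + c"
  define mu where "mu = 1 - p"
  define eta where "eta = etaf p t"
  define L where "L = Lbf p0 A B t"
  define e0 where "e0 = exp (- (eta * eta) / (16 * L))"
  have mu: "0 < mu" unfolding mu_def using p by simp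
  have al: "0 < 1 / (1 - p0)" using p by simp
  have tpos: "0 < real t" using t2 by simp
  have sq: "0 < sqrt (real t)" using tpos by simp
  have lnt: "0 < ln (real t)" using t2 by simp
  have WrA: "0 < Wr p0 A t" unfolding Wr_def using al AB sq by simp
  have WrB: "0 < Wr p0 B t" unfolding Wr_def using al AB sq by simp
  have Grp: "0 < Gr p0 t" unfolding Gr_def using al sq lnt by simp
  have crp: "0 < cr t" unfolding cr_def using tpos by simp
  have Wb: "Wr p0 A t \<le> real W" "real W \<le> Wr p0 A t + 1"
    unfolding W_def sweep_W_def Wr_def using nat_ceiling_bounds[of "1 / (1 - p0) * A * sqrt (real t)"] WrA
    unfolding Wr_def by auto
  have Hb: "Wr p0 B t \<le> real H" "real H \<le> Wr p0 B t + 1"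
    unfolding H_def sweep_H_def Wr_def using nat_ceiling_bounds[of "1 / (1 - p0) * B * sqrt (real t)"] WrB
    unfolding Wr_def by auto
  have Gb: "Gr p0 t \<le> real G" "real G \<le> Gr p0 t + 1"
    unfolding G_def sweep_G_def Gr_def using nat_ceiling_bounds[of "1 / (1 - p0) * (sqrt (real t) / ln (real t))"] Grp
    unfolding Gr_def by auto
  have cb': "cr t \<le> real c" "real c \<le> cr t + 1"
    unfolding c_def sweep_c_def cr_def using nat_ceiling_bounds[of "real t powr (1/3)"] crp
    unfolding cr_def by auto
  have Gpos: "0 < G" using Gb(1) Grp by linarith
  have Nb1: "2 * real H / real G \<le> real N" and Nb2: "real N \<le> 2 * real H / real G + 1"
    unfolding N_def sweep_N_def H_def[symmetric] G_def[symmetric]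
    using nat_ceiling_bounds[of "2 * real H / real G"] by auto
  have NG: "2 * H \<le> N * G"
  proof -
    have "2 * real H \<le> real N * real G" using Nb1 Gpos by (simp add: divide_le_eq)
    hence "real (2 * H) \<le> real (N * G)" by simp
    thus ?thesis by linarith
  qed
  have eta: "0 < eta" unfolding eta_def etaf_def using p crp by simp
  have Lpos: "0 < L"
  proof -
    have "0 \<le> (2 * (Wr p0 B t + 1) / Gr p0 t + 1) * (2 * Wr p0 A t + Gr p0 t + 3)"
      using WrA WrB Grp by (intro mult_nonneg_nonneg) auto
    thus ?thesis unfolding L_def Lbf_def using WrA WrB Grp crp by linarith
  qed
  define Xp where "Xp = (2 * (Wr p0 B t + 1) / Gr p0 t + 1) * (2 * Wr p0 A t + Gr p0 t + 3)"
  have L3: "0 \<le> Xp" unfolding Xp_def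
    using WrA WrB Grp by (intro mult_nonneg_nonneg) auto
  have Lexp: "L = (Wr p0 A t + Wr p0 B t + 2) + (Gr p0 t + cr t + 2) + Xp"
    unfolding L_def Lbf_def Xp_def by simp
  define P1 where "P1 = replicate W ((-1, 0) :: int \<times> int) @ replicate H (0, -1)"
  define Rf where "Rf = replicate M ((0, 1) :: int \<times> int)"
  define P3 where "P3 = sweep3 N W G"
  have P1u: "set P1 \<subseteq> unit_dirs" unfolding P1_def by (auto simp: unit_dirs_def)
  have Rfu: "set Rf \<subseteq> unit_dirs" unfolding Rf_def by (auto simp: unit_dirs_def)
  have P3u: "set P3 \<subseteq> unit_dirs" unfolding P3_def by (rule sweep3_unit)
  have lenP1: "real (length P1) \<le> L" unfolding P1_def Lexp using Wb Hb L3 Grp crp by simp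
  have lenRf: "real (length Rf) \<le> L" unfolding Rf_def Lexp M_def using Wb Hb L3 Gb cb' WrA WrB by simp
  have lenP3: "real (length P3) \<le> L"
  proof -
    have "real (length P3) \<le> real N * (2 * real W + real G)"
      using length_sweep3[of N W G] unfolding P3_def by (metis of_nat_le_iff of_nat_mult of_nat_add of_nat_numeral)
    also have "\<dots> \<le> (2 * (Wr p0 B t + 1) / Gr p0 t + 1) * (2 * Wr p0 A t + Gr p0 t + 3)"
    proof (rule mult_mono)
      have "2 * real H / real G \<le> 2 * (Wr p0 B t + 1) / Gr p0 t"
        using Hb Gb Grp by (intro frac_le) auto
      thus "real N \<le> 2 * (Wr p0 B t + 1) / Gr p0 t + 1" using Nb2 by linarith
      show "2 * real W + real G \<le> 2 * Wr p0 A t + Gr p0 t + 3" using Wb Gb by linarith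
      show "0 \<le> 2 * (Wr p0 B t + 1) / Gr p0 t + 1" using WrB Grp by simp
      show "0 \<le> 2 * real W + real G" by simp
    qed
    also have "\<dots> \<le> L" unfolding Lexp Xp_def[symmetric] using WrA WrB Grp crp by simp
    finally show ?thesis .
  qed
  have chern: "measure_pmf.prob (incr_pmf p ds) {es. eta \<le> devv p v (take k es) (take k ds)} \<le> e0"
    if "set ds \<subseteq> unit_dirs" "real (length ds) \<le> L" "v \<in> unit_dirs" for ds v k
  proof -
    have lam: "0 < eta / (8 * L)" "eta / (8 * L) \<le> 1/2" using eta Lpos cd unfolding eta_def L_def
      by (auto simp: field_simps)
    have "measure_pmf.prob (incr_pmf p ds) {es. eta \<le> devv p v (take k es) (take k ds)}
        \<le> exp (- (eta / (8 * L)) * eta + 4 * (eta / (8 * L))^2 * real (length ds))"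
      unfolding devv_def using incr_chernoff_take[OF _ _ that(3) that(1) lam, of p eta k] p by simp
    also have "\<dots> \<le> e0" unfolding e0_def
      using chernoff_exp_bound[OF eta Lpos _ that(2)] cd unfolding eta_def L_def by simp
    finally show ?thesis .
  qed
  define Om where "Om = pair_pmf (incr_pmf p P1) (pair_pmf (incr_pmf p Rf) (incr_pmf p P3))"
  define E where "E z = {w. visits y h (fst w @ take z (fst (snd w)) @ snd (snd w))}" for z
  have phase: "measure_pmf.prob (phase_pmf p p0 A B t) {es. visits y h es}
     = (\<Sum>z\<in>{0..M}. measure_pmf.prob (incr_pmf p (phase_instr p0 A B t z)) {es. visits y h es}) / real (card {0..M})"
    unfolding phase_pmf_def M_def G_def c_def by (rule prob_bind_pmf_of_set) auto
  have Pz: "measure_pmf.prob Om (E z) \<le> measure_pmf.prob (incr_pmf p (phase_instr p0 A B t z)) {es. visits y h es}"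
    if "z \<in> {0..M}" for z
  proof -
    from phase_instr_split[of z p0 t A B] that obtain T where "phase_instr p0 A B t z = P1 @ (take z Rf @ (P3 @ T))"
      unfolding P1_def Rf_def P3_def M_def W_def H_def G_def c_def N_def by auto
    from Pz_bound[OF this] show ?thesis unfolding Om_def E_def .
  qed
  have step3: "measure_pmf.prob Om (\<Union>z\<in>{0..M}. E z) \<le> (\<Sum>z\<in>{0..M}. measure_pmf.prob Om (E z))"
    by (rule measure_pmf.finite_measure_subadditive_finite) auto
  define B1 :: "((int \<times> int) list \<times> (int \<times> int) list \<times> (int \<times> int) list) set" where "B1 = (\<Union>v\<in>unit_dirs. {w. eta \<le> devv p v (take (length P1) (fst w)) (take (length P1) P1)})"
  define B2 :: "((int \<times> int) list \<times> (int \<times> int) list \<times> (int \<times> int) list) set" where "B2 = {w. eta \<le> devv p (0,-1) (take (length Rf) (fst (snd w))) (take (length Rf) Rf)}"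
  define B3 :: "((int \<times> int) list \<times> (int \<times> int) list \<times> (int \<times> int) list) set" where "B3 = (\<Union>jv\<in>{0..length P3} \<times> unit_dirs. {w. eta \<le> devv p (snd jv) (take (fst jv) (snd (snd w))) (take (fst jv) P3)})"
  have e0: "0 \<le> e0" unfolding e0_def by simp
  have pB1: "measure_pmf.prob Om B1 \<le> 4 * e0"
  proof -
    have "measure_pmf.prob Om B1 \<le> (\<Sum>v\<in>unit_dirs. measure_pmf.prob Om {w. eta \<le> devv p v (take (length P1) (fst w)) (take (length P1) P1)})"
      unfolding B1_def by (rule measure_pmf.finite_measure_subadditive_finite) (auto simp: finite_unit_dirs)
    also have "\<dots> \<le> (\<Sum>v\<in>unit_dirs. e0)"
    proof (rule sum_mono)
      fix v assume v: "v \<in> unit_dirs"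
      have "measure_pmf.prob Om {w. eta \<le> devv p v (take (length P1) (fst w)) (take (length P1) P1)}
          = measure_pmf.prob (incr_pmf p P1) {es. eta \<le> devv p v (take (length P1) es) (take (length P1) P1)}"
        unfolding Om_def by (rule prob_pair_fst)
      also have "\<dots> \<le> e0" by (rule chern[OF P1u lenP1 v])
      finally show "measure_pmf.prob Om {w. eta \<le> devv p v (take (length P1) (fst w)) (take (length P1) P1)} \<le> e0" .
    qed
    also have "\<dots> = 4 * e0" by (simp add: card_unit_dirs)
    finally show ?thesis .
  qed
  have pB2: "measure_pmf.prob Om B2 \<le> e0"
  proof -
    have "measure_pmf.prob Om B2 = measure_pmf.prob (pair_pmf (incr_pmf p Rf) (incr_pmf p P3))
        {s. eta \<le> devv p (0,-1) (take (length Rf) (fst s)) (take (length Rf) Rf)}"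
      unfolding Om_def B2_def using prob_pair_snd[of "incr_pmf p P1" "pair_pmf (incr_pmf p Rf) (incr_pmf p P3)"
          "\<lambda>s. eta \<le> devv p (0,-1) (take (length Rf) (fst s)) (take (length Rf) Rf)"] by simp
    also have "\<dots> = measure_pmf.prob (incr_pmf p Rf) {es. eta \<le> devv p (0,-1) (take (length Rf) es) (take (length Rf) Rf)}"
      by (rule prob_pair_fst)
    also have "\<dots> \<le> e0" by (rule chern[OF Rfu lenRf unit_dirs_mem(4)])
    finally show ?thesis .
  qed
  have pB3: "measure_pmf.prob Om B3 \<le> 4 * (real (length P3) + 1) * e0"
  proof -
    have "measure_pmf.prob Om B3 \<le> (\<Sum>jv\<in>{0..length P3} \<times> unit_dirs. measure_pmf.prob Om {w. eta \<le> devv p (snd jv) (take (fst jv) (snd (snd w))) (take (fst jv) P3)})"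
      unfolding B3_def by (rule measure_pmf.finite_measure_subadditive_finite) (auto simp: finite_unit_dirs)
    also have "\<dots> \<le> (\<Sum>jv\<in>{0..length P3} \<times> unit_dirs. e0)"
    proof (rule sum_mono)
      fix jv assume jv: "jv \<in> {0..length P3} \<times> unit_dirs"
      have "measure_pmf.prob Om {w. eta \<le> devv p (snd jv) (take (fst jv) (snd (snd w))) (take (fst jv) P3)}
          = measure_pmf.prob (pair_pmf (incr_pmf p Rf) (incr_pmf p P3)) {s. eta \<le> devv p (snd jv) (take (fst jv) (snd s)) (take (fst jv) P3)}"
        unfolding Om_def using prob_pair_snd[of "incr_pmf p P1" "pair_pmf (incr_pmf p Rf) (incr_pmf p P3)"
          "\<lambda>s. eta \<le> devv p (snd jv) (take (fst jv) (snd s)) (take (fst jv) P3)"] by simp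
      also have "\<dots> = measure_pmf.prob (incr_pmf p P3) {es. eta \<le> devv p (snd jv) (take (fst jv) es) (take (fst jv) P3)}"
        by (rule prob_pair_snd)
      also have "\<dots> \<le> e0" using jv by (intro chern[OF P3u lenP3]) auto
      finally show "measure_pmf.prob Om {w. eta \<le> devv p (snd jv) (take (fst jv) (snd (snd w))) (take (fst jv) P3)} \<le> e0" .
    qed
    also have "\<dots> = 4 * (real (length P3) + 1) * e0" by (simp add: card_unit_dirs card_cartesian_product)
    finally show ?thesis .
  qed
  have pBad: "measure_pmf.prob Om (B1 \<union> B2 \<union> B3) \<le> deltaf p p0 A B t"
  proof -
    have "measure_pmf.prob Om (B1 \<union> B2 \<union> B3) \<le> measure_pmf.prob Om B1 + measure_pmf.prob Om B2 + measure_pmf.prob Om B3"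
    proof -
      have "measure_pmf.prob Om (B1 \<union> B2 \<union> B3) \<le> measure_pmf.prob Om (B1 \<union> B2) + measure_pmf.prob Om B3"
        by (rule measure_Un_le) auto
      moreover have "measure_pmf.prob Om (B1 \<union> B2) \<le> measure_pmf.prob Om B1 + measure_pmf.prob Om B2"
        by (rule measure_Un_le) auto
      ultimately show ?thesis by linarith
    qed
    also have "\<dots> \<le> 4 * e0 + e0 + 4 * (real (length P3) + 1) * e0" using pB1 pB2 pB3 by linarith
    also have "\<dots> = (4 * real (length P3) + 9) * e0" by (simp add: algebra_simps)
    also have "\<dots> \<le> (4 * L + 9) * e0" using lenP3 e0 by (intro mult_right_mono) auto
    also have "\<dots> = deltaf p p0 A B t" unfolding e0_def deltaf_def L_def eta_def by simp
    finally show ?thesis .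
  qed
  have incl: "(UNIV - (B1 \<union> B2 \<union> B3)) \<inter> set_pmf Om \<subseteq> (\<Union>z\<in>{0..M}. E z)"
  proof
    fix w assume w: "w \<in> (UNIV - (B1 \<union> B2 \<union> B3)) \<inter> set_pmf Om"
    obtain e1 r e3 where wd: "w = (e1, r, e3)" by (cases w) auto
    have s1: "e1 \<in> set_pmf (incr_pmf p P1)" and s2: "r \<in> set_pmf (incr_pmf p Rf)" and s3: "e3 \<in> set_pmf (incr_pmf p P3)"
      using w unfolding wd Om_def by auto
    note sup1 = incr_support[OF P1u s1] and sup2 = incr_support[OF Rfu s2] and sup3 = incr_support[OF P3u s3]
    have nB1: "devv p v e1 P1 < eta" if "v \<in> unit_dirs" for v
      using w that sup1 unfolding wd B1_def by auto
    have nB2: "devv p (0,-1) r Rf < eta"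
      using w sup2 unfolding wd B2_def by auto
    have nB3: "devv p v (take j e3) (take j P3) < eta" if "v \<in> unit_dirs" "j \<le> length P3" for v j
    proof -
      have "\<forall>x\<in>{0..length P3}. \<forall>y\<in>unit_dirs. \<not> eta \<le> devv p y (take x e3) (take x P3)"
        using w unfolding wd B3_def by auto
      hence "\<not> eta \<le> devv p v (take j e3) (take j P3)" using that by simp
      thus ?thesis by simp
    qed
    have sP1: "sum_list P1 = (- int W, - int H)" unfolding P1_def by (simp add: sum_replicate_pair)
    have sRf: "sum_list Rf = (0, int M)" unfolding Rf_def by (simp add: sum_replicate_pair)
    have G1x: "\<bar>real_of_int (fst (y + sum_list e1)) - (real_of_int (fst y) - mu * W)\<bar> \<le> eta"
      using nB1[OF unit_dirs_mem(1)] nB1[OF unit_dirs_mem(2)]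
      unfolding devv_def dotv_simps sP1 mu_def by (simp add: abs_le_iff, (linarith)?)
    have G1y: "\<bar>real_of_int (snd (y + sum_list e1)) - (real_of_int (snd y) - mu * H)\<bar> \<le> eta"
      using nB1[OF unit_dirs_mem(3)] nB1[OF unit_dirs_mem(4)]
      unfolding devv_def dotv_simps sP1 mu_def by (simp add: abs_le_iff, (linarith)?)
    have G2: "mu * M - eta \<le> real_of_int (snd (sum_list r))"
      using nB2 unfolding devv_def dotv_simps sRf mu_def by simp
    have G3: "\<forall>j \<le> length (sweep3 N W G).
       \<bar>real_of_int (fst (sum_list (take j e3))) - mu * real_of_int (fst (sum_list (take j (sweep3 N W G))))\<bar> \<le> eta
     \<and> \<bar>real_of_int (snd (sum_list (take j e3))) - mu * real_of_int (snd (sum_list (take j (sweep3 N W G))))\<bar> \<le> eta"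
    proof (intro allI impI conjI)
      fix j assume j: "j \<le> length (sweep3 N W G)"
      show "\<bar>real_of_int (fst (sum_list (take j e3))) - mu * real_of_int (fst (sum_list (take j (sweep3 N W G))))\<bar> \<le> eta"
        using nB3[OF unit_dirs_mem(1), of j] nB3[OF unit_dirs_mem(2), of j] j
        unfolding devv_def dotv_simps mu_def P3_def by (simp add: abs_le_iff, (linarith)?)
      show "\<bar>real_of_int (snd (sum_list (take j e3))) - mu * real_of_int (snd (sum_list (take j (sweep3 N W G))))\<bar> \<le> eta"
        using nB3[OF unit_dirs_mem(3), of j] nB3[OF unit_dirs_mem(4), of j] j
        unfolding devv_def dotv_simps mu_def P3_def by (simp add: abs_le_iff, (linarith)?)
    qed
    have Mb: "real M \<le> Gr p0 t + cr t + 2" unfolding M_def using Gb cb' by simp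
    have HB: "mu * Wr p0 B t \<le> mu * H" using Hb mu by simp
    have WA: "mu * Wr p0 A t \<le> mu * W" using Wb mu by simp
    have MG3: "3 * eta \<le> mu * (real M - real G)"
    proof -
      have "real M - real G = real c" unfolding M_def by simp
      have "3 * eta = mu * (3 * cr t / 4)" by (simp add: eta_def etaf_def mu_def)
      also have "\<dots> \<le> mu * real c" using mu cb' crp by (intro mult_left_mono) auto
      finally show ?thesis using \<open>real M - real G = real c\<close> by simp
    qed
    have Cy1: "\<bar>real_of_int (snd h)\<bar> + \<bar>real_of_int (snd y)\<bar> + mu * M \<le> mu * H"
    proof -
      have "mu * M \<le> mu * (Gr p0 t + cr t + 2)" using Mb mu by simp
      thus ?thesis using ca box(2) HB unfolding mu_def by linarith
    qed
    have Cy2: "\<bar>real_of_int (snd h)\<bar> + \<bar>real_of_int (snd y)\<bar> + 3 * eta \<le> mu * H"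
      using cb box(2) HB unfolding mu_def eta_def by linarith
    have Cx: "\<bar>real_of_int (fst h)\<bar> + \<bar>real_of_int (fst y)\<bar> + 2 * eta + M \<le> mu * W"
      using cc box(1) WA Mb unfolding mu_def eta_def by linarith
    have "\<exists>z \<le> M. \<exists>j \<le> length e3. y + sum_list e1 + sum_list (take z r) + sum_list (take j e3) = h"
    proof (rule good_visit[where N = N and W = W and G = G and H = H and mu = mu and eta = eta])
      show "length r = M" "set r \<subseteq> unit_dirs" using sup2 unfolding Rf_def by auto
      show "length e3 = length (sweep3 N W G)" "set e3 \<subseteq> unit_dirs" using sup3 unfolding P3_def by auto
      show "0 < mu" "0 \<le> eta" "0 < G" "G \<le> M" using mu eta Gpos unfolding M_def by auto
    qed fact+
    then obtain z j where zj: "z \<le> M" "j \<le> length e3" "y + sum_list e1 + sum_list (take z r) + sum_list (take j e3) = h"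
      by blast
    have lz: "length (take z r) = z" using zj(1) sup2 unfolding Rf_def by simp
    have "visits y h (e1 @ take z r @ e3)"
      unfolding visits_def
    proof (intro exI[of _ "length e1 + z + j"] conjI)
      show "length e1 + z + j \<le> length (e1 @ take z r @ e3)" using lz zj(2) by simp
      have "take (length e1 + z + j) (e1 @ take z r @ e3) = e1 @ take z r @ take j e3"
        using lz by simp
      thus "y + sum_list (take (length e1 + z + j) (e1 @ take z r @ e3)) = h"
        using zj(3) by (simp add: algebra_simps)
    qed
    thus "w \<in> (\<Union>z\<in>{0..M}. E z)" using zj(1) unfolding wd E_def by auto
  qed
  have "1 - deltaf p p0 A B t \<le> 1 - measure_pmf.prob Om (B1 \<union> B2 \<union> B3)" using pBad by simp
  also have "\<dots> = measure_pmf.prob Om (UNIV - (B1 \<union> B2 \<union> B3))"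
    using measure_pmf.prob_compl[of "B1 \<union> B2 \<union> B3" Om] by simp
  also have "\<dots> = measure_pmf.prob Om ((UNIV - (B1 \<union> B2 \<union> B3)) \<inter> set_pmf Om)"
    by (simp add: measure_Int_set_pmf)
  also have "\<dots> \<le> measure_pmf.prob Om (\<Union>z\<in>{0..M}. E z)"
    by (rule measure_pmf.finite_measure_mono[OF incl]) simp
  also have "\<dots> \<le> (\<Sum>z\<in>{0..M}. measure_pmf.prob (incr_pmf p (phase_instr p0 A B t z)) {es. visits y h es})"
    using step3 Pz by (meson order.trans sum_mono)
  finally have fin: "1 - deltaf p p0 A B t \<le> (\<Sum>z\<in>{0..M}. measure_pmf.prob (incr_pmf p (phase_instr p0 A B t z)) {es. visits y h es})" .
  have cardM: "real (card {0..M}) = real (sweep_G p0 t + sweep_c t) + 1" unfolding M_def G_def c_def by simp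
  show ?thesis unfolding phase cardM[symmetric]
    using fin by (intro divide_right_mono) auto
qed

lemma asym_ev1:
  fixes k B mu al bb :: real assumes "k > 0" "B > 0" "mu > 0" "al > 0" "bb \<ge> 0"
  shows "eventually (\<lambda>x. bb + B * sqrt x + mu * (al * (sqrt x / ln x) + x powr (1/3) + 2) \<le> (1 + k) * B * sqrt x) at_top"
  using assms by real_asymp

lemma asym_ev2:
  fixes k B mu al bb :: real assumes "k > 0" "B > 0" "mu > 0" "bb \<ge> 0"
  shows "eventually (\<lambda>x. bb + B * sqrt x + 3 * (mu * x powr (1/3) / 4) \<le> (1 + k) * B * sqrt x) at_top"
  using assms by real_asymp

lemma asym_ev3:
  fixes k A mu al aa :: real assumes "k > 0" "A > 0" "mu > 0" "al > 0" "aa \<ge> 0"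
  shows "eventually (\<lambda>x. aa + A * sqrt x + 2 * (mu * x powr (1/3) / 4) + (al * (sqrt x / ln x) + x powr (1/3) + 2) \<le> (1 + k) * A * sqrt x) at_top"
  using assms by real_asymp

lemma asym_ev4:
  fixes al A B mu :: real assumes "al > 0" "A > 0" "B > 0" "mu > 0"
  shows "eventually (\<lambda>x. mu * x powr (1/3) / 4 \<le> 4 * ((al * A * sqrt x + al * B * sqrt x + 2) + (al * (sqrt x / ln x) + x powr (1/3) + 2)
     + (2 * (al * B * sqrt x + 1) / (al * (sqrt x / ln x)) + 1) * (2 * (al * A * sqrt x) + al * (sqrt x / ln x) + 3))) at_top"
  using assms by real_asymp

lemma asym_lim:
  fixes al A B mu :: real assumes "al > 0" "A > 0" "B > 0" "mu > 0"
  shows "((\<lambda>x. (x powr (1/3) + 2) / (al * (sqrt x / ln x)) +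
     (4 * ((al * A * sqrt x + al * B * sqrt x + 2) + (al * (sqrt x / ln x) + x powr (1/3) + 2)
     + (2 * (al * B * sqrt x + 1) / (al * (sqrt x / ln x)) + 1) * (2 * (al * A * sqrt x) + al * (sqrt x / ln x) + 3)) + 9)
     * exp (- ((mu * x powr (1/3) / 4) * (mu * x powr (1/3) / 4)) / (16 * ((al * A * sqrt x + al * B * sqrt x + 2) + (al * (sqrt x / ln x) + x powr (1/3) + 2)
     + (2 * (al * B * sqrt x + 1) / (al * (sqrt x / ln x)) + 1) * (2 * (al * A * sqrt x) + al * (sqrt x / ln x) + 3))))) \<longlongrightarrow> 0) at_top"
  using assms by real_asymp

lemma conds_eventually:
  fixes p p0 A B aa bb :: real
  assumes p: "0 < p" "p < p0" "p0 < 1" and AB: "A > 0" "B > 0" and ab: "aa \<ge> 0" "bb \<ge> 0"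
  shows "eventually (\<lambda>x. 2 \<le> x
    \<and> bb + B * sqrt x + (1-p) * (Gr p0 x + cr x + 2) \<le> (1-p) * Wr p0 B x
    \<and> bb + B * sqrt x + 3 * etaf p x \<le> (1-p) * Wr p0 B x
    \<and> aa + A * sqrt x + 2 * etaf p x + (Gr p0 x + cr x + 2) \<le> (1-p) * Wr p0 A x
    \<and> etaf p x \<le> 4 * Lbf p0 A B x) at_top"
proof -
  define al where "al = 1 / (1 - p0)"
  define mu where "mu = 1 - p"
  define k where "k = mu * al - 1"
  have al: "0 < al" unfolding al_def using p by simp
  have mu: "0 < mu" unfolding mu_def using p by simp
  have k: "0 < k"
  proof -
    have "1 - p0 < 1 - p" using p by simp
    hence "1 < (1 - p) / (1 - p0)" using p by simp
    thus ?thesis unfolding k_def mu_def al_def by simp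
  qed
  have rw: "(1 - p) * Wr p0 C x = (1 + k) * C * sqrt x" for C x
    unfolding Wr_def k_def mu_def al_def by (simp add: field_simps)
  have e0: "eventually (\<lambda>x::real. 2 \<le> x) at_top" by (rule eventually_ge_at_top)
  have e1: "eventually (\<lambda>x. bb + B * sqrt x + (1-p) * (Gr p0 x + cr x + 2) \<le> (1-p) * Wr p0 B x) at_top"
    using asym_ev1[OF k AB(2) mu al ab(2)] by (rule eventually_mono) (simp add: rw Gr_def cr_def al_def mu_def)
  have e2: "eventually (\<lambda>x. bb + B * sqrt x + 3 * etaf p x \<le> (1-p) * Wr p0 B x) at_top"
    using asym_ev2[OF k AB(2) mu ab(2)] by (rule eventually_mono) (simp add: rw etaf_def cr_def mu_def)
  have e3: "eventually (\<lambda>x. aa + A * sqrt x + 2 * etaf p x + (Gr p0 x + cr x + 2) \<le> (1-p) * Wr p0 A x) at_top"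
    using asym_ev3[OF k AB(1) mu al ab(1)] by (rule eventually_mono) (simp add: rw etaf_def Gr_def cr_def al_def mu_def)
  have e4: "eventually (\<lambda>x. etaf p x \<le> 4 * Lbf p0 A B x) at_top"
    using asym_ev4[OF al AB mu] by (rule eventually_mono) (simp add: etaf_def Lbf_def Wr_def Gr_def cr_def al_def mu_def)
  show ?thesis by (intro eventually_conj e0 e1 e2 e3 e4)
qed

lemma delta_lim:
  fixes p p0 A B :: real
  assumes p: "0 < p" "p < p0" "p0 < 1" and AB: "A > 0" "B > 0"
  shows "((\<lambda>x. (cr x + 2) / Gr p0 x + deltaf p p0 A B x) \<longlongrightarrow> 0) at_top"
proof -
  define al where "al = 1 / (1 - p0)"
  define mu where "mu = 1 - p"
  have al: "0 < al" unfolding al_def using p by simp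
  have mu: "0 < mu" unfolding mu_def using p by simp
  show ?thesis
    unfolding deltaf_def Lbf_def etaf_def Wr_def Gr_def cr_def al_def[symmetric] mu_def[symmetric]
    using asym_lim[OF al AB mu] .
qed

theorem proposition7:
  fixes p p0 A B :: real and x_home :: "int \<times> int"
  assumes "0 < p" and "p < p0" and "p0 < 1" and "A > 0" and "B > 0"
  shows "\<exists>\<epsilon> :: nat \<Rightarrow> real. \<epsilon> \<longlonglongrightarrow> 0 \<and>
    (\<forall>t :: nat. t > 0 \<longrightarrow> (\<forall>y :: int \<times> int.
        \<bar>real_of_int (fst y)\<bar> \<le> A * sqrt (real t) \<and> \<bar>real_of_int (snd y)\<bar> \<le> B * sqrt (real t) \<longrightarrow>
        measure_pmf.prob (phase_pmf p p0 A B t) {es. visits y x_home es}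
          \<ge> (1 - \<epsilon> t) / real (sweep_G p0 t)))"
proof -
  note p = assms(1-3) and AB = assms(4,5)
  define aa where "aa = \<bar>real_of_int (fst x_home)\<bar>"
  define bb where "bb = \<bar>real_of_int (snd x_home)\<bar>"
  from conds_eventually[OF p AB, of aa bb] obtain X0 where X0: "\<And>x. x \<ge> X0 \<Longrightarrow> 2 \<le> x
    \<and> bb + B * sqrt x + (1-p) * (Gr p0 x + cr x + 2) \<le> (1-p) * Wr p0 B x
    \<and> bb + B * sqrt x + 3 * etaf p x \<le> (1-p) * Wr p0 B x
    \<and> aa + A * sqrt x + 2 * etaf p x + (Gr p0 x + cr x + 2) \<le> (1-p) * Wr p0 A x
    \<and> etaf p x \<le> 4 * Lbf p0 A B x"
    unfolding aa_def bb_def eventually_at_top_linorder by auto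
  define T where "T = max 2 (nat \<lceil>X0\<rceil>)"
  have condT: "2 \<le> real t
    \<and> bb + B * sqrt t + (1-p) * (Gr p0 t + cr t + 2) \<le> (1-p) * Wr p0 B t
    \<and> bb + B * sqrt t + 3 * etaf p t \<le> (1-p) * Wr p0 B t
    \<and> aa + A * sqrt t + 2 * etaf p t + (Gr p0 t + cr t + 2) \<le> (1-p) * Wr p0 A t
    \<and> etaf p t \<le> 4 * Lbf p0 A B t" if "T \<le> t" for t
  proof (rule X0)
    have "nat \<lceil>X0\<rceil> \<le> t" using that unfolding T_def by simp
    thus "X0 \<le> real t" by linarith
  qed
  have al: "0 < 1 / (1 - p0)" using p by simp
  have basic: "Gr p0 t \<le> real (sweep_G p0 t) \<and> 0 < Gr p0 t \<and> real (sweep_c t) \<le> cr t + 1 \<and> 0 \<le> deltaf p p0 A B t"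
    if "2 \<le> t" for t :: nat
  proof -
    have tpos: "0 < real t" using that by simp
    have sq: "0 < sqrt (real t)" using tpos by simp
    have lnt: "0 < ln (real t)" using that by simp
    have Grp: "0 < Gr p0 t" unfolding Gr_def using al sq lnt by simp
    have crp: "0 < cr t" unfolding cr_def using tpos by simp
    have WrA: "0 < Wr p0 A t" unfolding Wr_def using al AB sq by simp
    have WrB: "0 < Wr p0 B t" unfolding Wr_def using al AB sq by simp
    have "Gr p0 t \<le> real (sweep_G p0 t)"
      unfolding sweep_G_def using nat_ceiling_bounds[of "1 / (1 - p0) * (sqrt (real t) / ln (real t))"] Grp
      unfolding Gr_def by auto
    moreover have "real (sweep_c t) \<le> cr t + 1"
      unfolding sweep_c_def cr_def using nat_ceiling_bounds[of "real t powr (1/3)"] crp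
      unfolding cr_def by auto
    moreover have "0 \<le> deltaf p p0 A B t"
    proof -
      have "0 \<le> (2 * (Wr p0 B t + 1) / Gr p0 t + 1) * (2 * Wr p0 A t + Gr p0 t + 3)"
        using WrA WrB Grp by (intro mult_nonneg_nonneg) auto
      hence "0 \<le> Lbf p0 A B t" unfolding Lbf_def using WrA WrB Grp crp by linarith
      thus ?thesis unfolding deltaf_def by simp
    qed
    ultimately show ?thesis using Grp by auto
  qed
  define \<epsilon> where "\<epsilon> t = (if T \<le> t then 1 - (1 - deltaf p p0 A B (real t)) * real (sweep_G p0 t)
      / (real (sweep_G p0 t) + real (sweep_c t) + 1) else 1)" for t
  show ?thesis
  proof (intro exI[of _ \<epsilon>] conjI allI impI)
    have up: "((\<lambda>t. (cr (real t) + 2) / Gr p0 (real t) + deltaf p p0 A B (real t)) \<longlongrightarrow> 0) sequentially"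
      using filterlim_compose[OF delta_lim[OF p AB] filterlim_real_sequentially] by (simp add: o_def)
    have bnds: "0 \<le> \<epsilon> t \<and> \<epsilon> t \<le> (cr (real t) + 2) / Gr p0 (real t) + deltaf p p0 A B (real t)" if "T \<le> t" for t
    proof -
      have t2: "2 \<le> t" using that unfolding T_def by simp
      note b = basic[OF t2]
      define Gt where "Gt = real (sweep_G p0 t)"
      define ct where "ct = real (sweep_c t)"
      define d where "d = deltaf p p0 A B (real t)"
      define q where "q = Gt / (Gt + ct + 1)"
      have Gt: "0 < Gt" using b unfolding Gt_def by linarith
      have ct: "0 \<le> ct" unfolding ct_def by simp
      have q: "0 \<le> q" "q \<le> 1" unfolding q_def using Gt ct by (auto simp: field_simps)
      have d: "0 \<le> d" using b unfolding d_def by simp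
      have eps0: "\<epsilon> t = 1 - (1 - d) * Gt / (Gt + ct + 1)" unfolding \<epsilon>_def d_def Gt_def ct_def using that by simp
      have "(1 - d) * Gt / (Gt + ct + 1) = (1 - d) * q" unfolding q_def by simp
      hence eps: "\<epsilon> t = (1 - q) + d * q" using eps0 by (simp add: algebra_simps)
      have "1 - q = (ct + 1) / (Gt + ct + 1)" unfolding q_def using Gt ct by (simp add: field_simps)
      also have "\<dots> \<le> (ct + 1) / Gt" using Gt ct by (intro divide_left_mono) auto
      also have "\<dots> \<le> (cr (real t) + 2) / Gr p0 (real t)"
        using b Gt ct unfolding Gt_def ct_def by (intro frac_le) auto
      finally have "1 - q \<le> (cr (real t) + 2) / Gr p0 (real t)" .
      moreover have "d * q \<le> d" using d q by (simp add: mult_left_le)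
      moreover have "0 \<le> d * q" using d q by simp
      ultimately show ?thesis unfolding eps d_def using q by linarith
    qed
    show "\<epsilon> \<longlonglongrightarrow> 0"
    proof (rule tendsto_sandwich[OF _ _ tendsto_const up])
      show "\<forall>\<^sub>F n in sequentially. 0 \<le> \<epsilon> n"
        using bnds unfolding eventually_sequentially by blast
      show "\<forall>\<^sub>F n in sequentially. \<epsilon> n \<le> (cr (real n) + 2) / Gr p0 (real n) + deltaf p p0 A B (real n)"
        using bnds unfolding eventually_sequentially by blast
    qed
    fix t :: nat and y :: "int \<times> int"
    assume "0 < t"
    assume box: "\<bar>real_of_int (fst y)\<bar> \<le> A * sqrt (real t) \<and> \<bar>real_of_int (snd y)\<bar> \<le> B * sqrt (real t)"
    show "(1 - \<epsilon> t) / real (sweep_G p0 t) \<le> measure_pmf.prob (phase_pmf p p0 A B t) {es. visits y x_home es}"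
    proof (cases "T \<le> t")
      case False
      thus ?thesis unfolding \<epsilon>_def by simp
    next
      case True
      have t2: "2 \<le> t" using True unfolding T_def by simp
      note c = condT[OF True]
      have k: "(1 - deltaf p p0 A B t) / (real (sweep_G p0 t + sweep_c t) + 1)
          \<le> measure_pmf.prob (phase_pmf p p0 A B t) {es. visits y x_home es}"
        by (rule key[OF p AB t2]) (use c box in \<open>auto simp: aa_def bb_def\<close>)
      have Gt: "0 < real (sweep_G p0 t)" using basic[OF t2] by linarith
      define Gt where "Gt = real (sweep_G p0 t)"
      define ct where "ct = real (sweep_c t)"
      define d where "d = deltaf p p0 A B (real t)"
      have Gt': "0 < Gt" "0 < Gt + ct + 1" using Gt unfolding Gt_def ct_def by auto
      have "1 - \<epsilon> t = (1 - d) * Gt / (Gt + ct + 1)" unfolding \<epsilon>_def d_def Gt_def ct_def using True by simp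
      hence "(1 - \<epsilon> t) / Gt = (1 - d) / (Gt + ct + 1)" using Gt' by (simp add: field_simps)
      hence "(1 - \<epsilon> t) / real (sweep_G p0 t) = (1 - deltaf p p0 A B t) / (real (sweep_G p0 t + sweep_c t) + 1)"
        unfolding Gt_def ct_def d_def by (simp add: add.commute add.left_commute)
      with k show ?thesis by simp
    qed
  qed
qed

end
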